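(* Let $(\mathbf X_k)_{k\in\mathbb Z_+}$ be a 2-type doubly symmetric Galton--Watson process with immigration (see context) with offspring means $(\alpha,\beta)\in(0,1)^2$, $\alpha+\beta=1$, $\mathbf X_0=\mathbf 0$, and suppose $\mathbb E\|\boldsymbol\xi_{1,1,1}\|^\ell,\mathbb E\|\boldsymbol\xi_{1,1,2}\|^\ell,\mathbb E\|\boldsymbol\varepsilon_1\|^\ell<\infty$ for some $\ell\in\mathbb N$. Then, as $k\to\infty$, $\mathbb E\|\mathbf X_k\|^\ell=O(k^\ell)$, $\mathbb E(\mathbf M_k^{\otimes\ell})=O(k^{\lfloor\ell/2\rfloor})$, $\mathbb E(U_k^\ell)=O(k^\ell)$, and $\mathbb E(V_k^{2j})=O(k^j)$ for every $j\in\mathbb Z_+$ with $2j\le\ell$.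
   Context: Process: $\mathbf X_k=(X_{k,1},X_{k,2})^\top$, $\mathbf X_0=\mathbf 0$, and for $k\in\mathbb N$, $\mathbf X_k=\sum_{j=1}^{X_{k-1,1}}\boldsymbol\xi_{k,j,1}+\sum_{j=1}^{X_{k-1,2}}\boldsymbol\xi_{k,j,2}+\boldsymbol\varepsilon_k$, where $\{\boldsymbol\xi_{k,j,i},\boldsymbol\varepsilon_k:k,j\in\mathbb N,i\in\{1,2\}\}$ are independent $\mathbb Z_+^2$-valued random vectors and each of the families $\{\boldsymbol\xi_{k,j,1}\}$, $\{\boldsymbol\xi_{k,j,2}\}$, $\{\boldsymbol\varepsilon_k\}$ is identically distributed. $\mathbb E\boldsymbol\xi_{1,1,1}=(\alpha,\beta)^\top$, $\mathbb E\boldsymbol\xi_{1,1,2}=(\beta,\alpha)^\top$, $\mathbf m_{\boldsymbol\xi}=\begin{bmatrix}\alpha&\beta\\\beta&\alpha\end{bmatrix}$, $\mathbf m_{\boldsymbol\varepsilon}=\mathbb E\boldsymbol\varepsilon_1$. $\mathbf M_k=\mathbf X_k-\mathbf m_{\boldsymbol\xi}\mathbf X_{k-1}-\mathbf m_{\boldsymbol\varepsilon}$, $U_k=X_{k,1}+X_{k,2}$, $V_k=X_{k,1}-X_{k,2}$; $\mathbf M_k^{\otimes\ell}$ is the $\ell$-fold Kronecker power, and $O(\cdot)$ for vectors is meant componentwise (equivalently in norm). *)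

theory Defs
  imports "HOL-Probability.Probability" "HOL-Library.Landau_Symbols"
begin

text \<open>Index set for the independent family of offspring and immigration vectors.
  Xi k j i stands for xi_{k,j,i} (k,j >= 1, i in {1,2}); Eps k stands for eps_k (k >= 1).\<close>
datatype gw_idx = Xi nat nat nat | Eps nat

definition gw_family ::
  "(nat \<Rightarrow> nat \<Rightarrow> nat \<Rightarrow> 'a \<Rightarrow> nat \<times> nat) \<Rightarrow> (nat \<Rightarrow> 'a \<Rightarrow> nat \<times> nat) \<Rightarrow> gw_idx \<Rightarrow> 'a \<Rightarrow> nat \<times> nat"
  where "gw_family \<xi> \<epsilon> t \<omega> = (case t of Xi k j i \<Rightarrow> \<xi> k j i \<omega> | Eps k \<Rightarrow> \<epsilon> k \<omega>)"

definition gw_index_set :: "gw_idx set"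
  where "gw_index_set = {Xi k j i | k j i. 1 \<le> k \<and> 1 \<le> j \<and> i \<in> {1,2}} \<union> {Eps k | k. 1 \<le> k}"

fun gw_X ::
  "(nat \<Rightarrow> nat \<Rightarrow> nat \<Rightarrow> 'a \<Rightarrow> nat \<times> nat) \<Rightarrow> (nat \<Rightarrow> 'a \<Rightarrow> nat \<times> nat) \<Rightarrow> nat \<Rightarrow> 'a \<Rightarrow> nat \<times> nat"
  where
    "gw_X \<xi> \<epsilon> 0 \<omega> = (0, 0)"
  | "gw_X \<xi> \<epsilon> (Suc k) \<omega> =
       (\<Sum>j\<in>{1..fst (gw_X \<xi> \<epsilon> k \<omega>)}. \<xi> (Suc k) j 1 \<omega>)
     + (\<Sum>j\<in>{1..snd (gw_X \<xi> \<epsilon> k \<omega>)}. \<xi> (Suc k) j 2 \<omega>)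
     + \<epsilon> (Suc k) \<omega>"

definition vec_real :: "nat \<times> nat \<Rightarrow> real \<times> real"
  where "vec_real v = (real (fst v), real (snd v))"

text \<open>Entry of the l-fold Kronecker power of a vector v in R^2 (components v 1, v 2),
  at the multi-index is = [i_1,...,i_l] with i_r in {1,2}.\<close>
definition kron_pow_entry :: "(nat \<Rightarrow> real) \<Rightarrow> nat list \<Rightarrow> real"
  where "kron_pow_entry v is = (\<Prod>i\<leftarrow>is. v i)"

end

theory Submission
  imports Defs
begin

lemma card_fibers_bound:
  fixes \<sigma> :: "nat \<Rightarrow> 'j"
  assumes "\<forall>t\<in>\<sigma> ` {..<m}. card {r. r<m \<and> \<sigma> r = t} \<noteq> 1"
  shows "card (\<sigma> ` {..<m}) \<le> m div 2"
proof -
  have "m = (\<Sum>r\<in>{..<m}. (1::nat))" by simp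
  also have "\<dots> = (\<Sum>t\<in>\<sigma> ` {..<m}. \<Sum>r\<in>{r\<in>{..<m}. \<sigma> r = t}. 1)"
    by (rule sum.group[symmetric]) auto
  also have "\<dots> = (\<Sum>t\<in>\<sigma> ` {..<m}. card {r. r<m \<and> \<sigma> r = t})"
    by (intro sum.cong) auto
  finally have m: "m = (\<Sum>t\<in>\<sigma> ` {..<m}. card {r. r<m \<and> \<sigma> r = t})" .
  have "(\<Sum>t\<in>\<sigma> ` {..<m}. 2) \<le> (\<Sum>t\<in>\<sigma> ` {..<m}. card {r. r<m \<and> \<sigma> r = t})"
  proof (rule sum_mono)
    fix t assume t: "t \<in> \<sigma> ` {..<m}"
    then obtain r where "r<m" "\<sigma> r = t" by auto
    then have "card {r. r<m \<and> \<sigma> r = t} \<noteq> 0" by auto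
    moreover have "card {r. r<m \<and> \<sigma> r = t} \<noteq> 1" using assms t by blast
    ultimately show "2 \<le> card {r. r<m \<and> \<sigma> r = t}" by linarith
  qed
  then have "2 * card (\<sigma> ` {..<m}) \<le> m" using m by simp
  then show ?thesis by linarith
qed

lemma count_bound:
  fixes J :: "'j set" and m :: nat
  assumes J: "finite J"
  shows "card {\<sigma> \<in> PiE {..<m} (\<lambda>_. J). \<forall>t\<in>J. card {r. r<m \<and> \<sigma> r = t} \<noteq> 1}
           \<le> m^m * card J ^ (m div 2)"
proof (cases "m = 0")
  case True
  have "{\<sigma> \<in> PiE {..<m} (\<lambda>_. J). \<forall>t\<in>J. card {r. r<m \<and> \<sigma> r = t} \<noteq> 1} \<subseteq> PiE {..<m} (\<lambda>_. J)" by auto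
  then have "card {\<sigma> \<in> PiE {..<m} (\<lambda>_. J). \<forall>t\<in>J. card {r. r<m \<and> \<sigma> r = t} \<noteq> 1} \<le> card (PiE {..<m} (\<lambda>_. J))"
    by (intro card_mono) (auto simp: J finite_PiE)
  also have "\<dots> = 1" using True by simp
  finally show ?thesis using True by simp
next
  case False
  define p where "p = m div 2"
  let ?B = "{\<sigma> \<in> PiE {..<m} (\<lambda>_. J). \<forall>t\<in>J. card {r. r<m \<and> \<sigma> r = t} \<noteq> 1}"
  have sub: "?B \<subseteq> (\<Union>f\<in>PiE {..<p} (\<lambda>_. J). PiE {..<m} (\<lambda>_. f ` {..<p}))"
  proof
    fix \<sigma> assume s: "\<sigma> \<in> ?B"
    define S where "S = \<sigma> ` {..<m}"
    have SJ: "S \<subseteq> J" using s by (auto simp: S_def)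
    have cS: "card S \<le> p" unfolding S_def p_def
      by (rule card_fibers_bound) (use s in auto)
    have fS: "finite S" using SJ J finite_subset by auto
    have Sne: "S \<noteq> {}" using False by (auto simp: S_def)
    then have cpos: "card S > 0" using fS by auto
    obtain h where h: "bij_betw h {0..<card S} S" using ex_bij_betw_nat_finite[OF fS] by blast
    define f where "f = restrict (\<lambda>i. if i < card S then h i else h 0) {..<p}"
    have hS: "\<And>i. i < card S \<Longrightarrow> h i \<in> S" using h by (auto simp: bij_betw_def)
    have fin: "f \<in> PiE {..<p} (\<lambda>_. J)"
      unfolding f_def using hS cpos SJ by auto
    have "S \<subseteq> f ` {..<p}"
    proof
      fix t assume "t \<in> S"
      then have "t \<in> h ` {0..<card S}" using h by (simp add: bij_betw_def)
      then obtain i where "i < card S" "h i = t" by auto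
      then show "t \<in> f ` {..<p}" using cS by (auto simp: f_def image_iff intro!: bexI[of _ i])
    qed
    then have "\<sigma> \<in> PiE {..<m} (\<lambda>_. f ` {..<p})" using s by (auto simp: S_def PiE_def Pi_def)
    then show "\<sigma> \<in> (\<Union>f\<in>PiE {..<p} (\<lambda>_. J). PiE {..<m} (\<lambda>_. f ` {..<p}))" using fin by blast
  qed
  have "card ?B \<le> card (\<Union>f\<in>PiE {..<p} (\<lambda>_. J). PiE {..<m} (\<lambda>_. f ` {..<p}))"
    by (intro card_mono sub) (auto simp: J finite_PiE)
  also have "\<dots> \<le> (\<Sum>f\<in>PiE {..<p} (\<lambda>_. J). card (PiE {..<m} (\<lambda>_. f ` {..<p})))"
    by (rule card_UN_le) (simp add: J finite_PiE)
  also have "\<dots> \<le> (\<Sum>f\<in>PiE {..<p} (\<lambda>_. J). m^m)"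
  proof (rule sum_mono)
    fix f assume "f \<in> PiE {..<p} (\<lambda>_. J)"
    have "card (PiE {..<m} (\<lambda>_. f ` {..<p})) = card (f ` {..<p}) ^ m"
      by (simp add: card_PiE)
    also have "\<dots> \<le> p ^ m" by (intro power_mono) (auto intro: card_image_le[THEN order_trans])
    also have "\<dots> \<le> m ^ m" by (intro power_mono) (auto simp: p_def)
    finally show "card (PiE {..<m} (\<lambda>_. f ` {..<p})) \<le> m^m" .
  qed
  also have "\<dots> = m^m * card J ^ p" by (simp add: card_PiE)
  finally show ?thesis by (simp add: p_def)
qed

lemma prod_abs_le:
  fixes x :: "'r \<Rightarrow> real"
  assumes R: "finite R" and c: "card R \<le> m"
  shows "(\<Prod>r\<in>R. \<bar>x r\<bar>) \<le> 1 + (\<Sum>r\<in>R. \<bar>x r\<bar>^m)"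
proof -
  define Mx where "Mx = Max (insert 1 ((\<lambda>r. \<bar>x r\<bar>) ` R))"
  have fin: "finite (insert 1 ((\<lambda>r. \<bar>x r\<bar>) ` R))" using R by simp
  have M1: "1 \<le> Mx" unfolding Mx_def using fin by simp
  have Mr: "\<And>r. r \<in> R \<Longrightarrow> \<bar>x r\<bar> \<le> Mx" unfolding Mx_def using fin by simp
  have "(\<Prod>r\<in>R. \<bar>x r\<bar>) \<le> (\<Prod>r\<in>R. Mx)"
    by (intro prod_mono) (auto simp: Mr)
  also have "\<dots> = Mx ^ card R" by simp
  also have "\<dots> \<le> Mx ^ m" using M1 c by (intro power_increasing) auto
  also have "\<dots> \<le> 1 + (\<Sum>r\<in>R. \<bar>x r\<bar>^m)"
  proof -
    have "Mx \<in> insert 1 ((\<lambda>r. \<bar>x r\<bar>) ` R)" unfolding Mx_def using fin by (intro Max_in) auto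
    then consider "Mx = 1" | r where "r \<in> R" "Mx = \<bar>x r\<bar>" by auto
    then show ?thesis
    proof cases
      case 1 then show ?thesis by (simp add: sum_nonneg)
    next
      case 2
      have "\<bar>x r\<bar>^m \<le> (\<Sum>r\<in>R. \<bar>x r\<bar>^m)"
        using 2 R by (intro member_le_sum) auto
      then show ?thesis using 2 by simp
    qed
  qed
  finally show ?thesis .
qed

lemma abs_pow_le_1_plus:
  fixes x :: real assumes "i \<le> m" shows "\<bar>x\<bar>^i \<le> 1 + \<bar>x\<bar>^m"
proof (cases "\<bar>x\<bar> \<le> 1")
  case True
  then have "\<bar>x\<bar>^i \<le> 1" by (simp add: power_le_one)
  then show ?thesis by (smt (verit) zero_le_power abs_ge_zero)
next
  case False
  then have "\<bar>x\<bar>^i \<le> \<bar>x\<bar>^m" using assms by (intro power_increasing) auto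
  then show ?thesis by simp
qed

lemma (in prob_space) core:
  fixes Y :: "'j \<Rightarrow> 'a \<Rightarrow> 'b" and g :: "nat \<Rightarrow> 'j \<Rightarrow> 'b \<Rightarrow> real" and K :: real
  assumes ind: "indep_vars (\<lambda>_. count_space UNIV) Y J" and J: "finite J"
    and mean0: "\<And>r t. r < m \<Longrightarrow> t \<in> J \<Longrightarrow> expectation (\<lambda>\<omega>. g r t (Y t \<omega>)) = 0"
    and intm: "\<And>r t. r < m \<Longrightarrow> t \<in> J \<Longrightarrow> integrable M (\<lambda>\<omega>. \<bar>g r t (Y t \<omega>)\<bar>^m)"
    and momK: "\<And>r t. r < m \<Longrightarrow> t \<in> J \<Longrightarrow> expectation (\<lambda>\<omega>. \<bar>g r t (Y t \<omega>)\<bar>^m) \<le> K"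
    and K0: "0 \<le> K"
  shows "integrable M (\<lambda>\<omega>. \<Prod>r<m. \<Sum>t\<in>J. g r t (Y t \<omega>))"
    and "\<bar>expectation (\<lambda>\<omega>. \<Prod>r<m. \<Sum>t\<in>J. g r t (Y t \<omega>))\<bar>
           \<le> (1 + real m * K) * (m^m * card J ^ (m div 2))"
proof -
  have rv: "\<And>t. t \<in> J \<Longrightarrow> Y t \<in> measurable M (count_space UNIV)"
    using ind by (auto simp: indep_vars_def)
  have meas: "\<And>t h. t \<in> J \<Longrightarrow> (\<lambda>\<omega>. h (Y t \<omega>) :: real) \<in> borel_measurable M"
    by (rule measurable_compose[OF rv]) auto
  define P where "P = PiE {..<m} (\<lambda>_. J)"
  have finP: "finite P" unfolding P_def using J by (simp add: finite_PiE)
  define w where "w = (\<lambda>\<sigma> \<omega>. \<Prod>r<m. g r (\<sigma> r) (Y (\<sigma> r) \<omega>))"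
  have expand: "\<And>\<omega>. (\<Prod>r<m. \<Sum>t\<in>J. g r t (Y t \<omega>)) = (\<Sum>\<sigma>\<in>P. w \<sigma> \<omega>)"
    unfolding P_def w_def using J by (subst prod_sum_PiE) auto
  have sJ: "\<And>\<sigma> r. \<sigma> \<in> P \<Longrightarrow> r < m \<Longrightarrow> \<sigma> r \<in> J" unfolding P_def by auto
  have subprod: "integrable M (\<lambda>\<omega>. \<Prod>r\<in>R. g r (\<sigma> r) (Y (\<sigma> r) \<omega>))
      \<and> expectation (\<lambda>\<omega>. \<bar>\<Prod>r\<in>R. g r (\<sigma> r) (Y (\<sigma> r) \<omega>)\<bar>) \<le> 1 + real m * K"
    if \<sigma>: "\<sigma> \<in> P" and R: "R \<subseteq> {..<m}" for \<sigma> R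
  proof -
    have finR: "finite R" using R finite_subset by blast
    have cR: "card R \<le> m" using card_mono[OF _ R] by simp
    let ?B = "\<lambda>\<omega>. 1 + (\<Sum>r\<in>R. \<bar>g r (\<sigma> r) (Y (\<sigma> r) \<omega>)\<bar>^m)"
    have intB: "integrable M ?B"
      using R \<sigma> sJ by (intro Bochner_Integration.integrable_add integrable_const Bochner_Integration.integrable_sum intm) auto
    have bnd: "\<bar>\<Prod>r\<in>R. g r (\<sigma> r) (Y (\<sigma> r) \<omega>)\<bar> \<le> ?B \<omega>" for \<omega>
      using prod_abs_le[OF finR cR, of "\<lambda>r. g r (\<sigma> r) (Y (\<sigma> r) \<omega>)"] by (simp add: abs_prod)
    have mP: "(\<lambda>\<omega>. \<Prod>r\<in>R. g r (\<sigma> r) (Y (\<sigma> r) \<omega>)) \<in> borel_measurable M"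
      using R \<sigma> sJ by (intro borel_measurable_prod meas) auto
    have int: "integrable M (\<lambda>\<omega>. \<Prod>r\<in>R. g r (\<sigma> r) (Y (\<sigma> r) \<omega>))"
      by (rule Bochner_Integration.integrable_bound[OF intB mP], intro AE_I2)
         (metis (no_types) bnd abs_ge_self order_trans real_norm_def)
    have "expectation (\<lambda>\<omega>. \<bar>\<Prod>r\<in>R. g r (\<sigma> r) (Y (\<sigma> r) \<omega>)\<bar>) \<le> expectation ?B"
      by (intro integral_mono int intB integrable_abs bnd)
    also have "\<dots> = 1 + (\<Sum>r\<in>R. expectation (\<lambda>\<omega>. \<bar>g r (\<sigma> r) (Y (\<sigma> r) \<omega>)\<bar>^m))"
    proof -
      have ii: "\<And>r. r \<in> R \<Longrightarrow> integrable M (\<lambda>\<omega>. \<bar>g r (\<sigma> r) (Y (\<sigma> r) \<omega>)\<bar>^m)"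
        using R \<sigma> sJ intm by auto
      have "expectation ?B = expectation (\<lambda>_. 1) + expectation (\<lambda>\<omega>. \<Sum>r\<in>R. \<bar>g r (\<sigma> r) (Y (\<sigma> r) \<omega>)\<bar>^m)"
        by (rule Bochner_Integration.integral_add) (auto intro!: Bochner_Integration.integrable_sum ii)
      also have "expectation (\<lambda>\<omega>. \<Sum>r\<in>R. \<bar>g r (\<sigma> r) (Y (\<sigma> r) \<omega>)\<bar>^m) = (\<Sum>r\<in>R. expectation (\<lambda>\<omega>. \<bar>g r (\<sigma> r) (Y (\<sigma> r) \<omega>)\<bar>^m))"
        by (rule Bochner_Integration.integral_sum) (rule ii)
      finally show ?thesis by (simp add: prob_space)
    qed
    also have "\<dots> \<le> 1 + (\<Sum>r\<in>R. K)"
      using R \<sigma> sJ momK by (intro add_left_mono sum_mono) auto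
    also have "\<dots> \<le> 1 + real m * K"
    proof -
      have K0: "0 < m \<Longrightarrow> 0 \<le> K"
      proof -
        assume m0: "0 < m"
        have "0 \<le> expectation (\<lambda>\<omega>. \<bar>g 0 (\<sigma> 0) (Y (\<sigma> 0) \<omega>)\<bar>^m)" by (intro integral_nonneg_AE) auto
        also have "\<dots> \<le> K" using m0 \<sigma> sJ momK by auto
        finally show ?thesis .
      qed
      have "(\<Sum>r\<in>R. K) = card R * K" by simp
      also have "\<dots> \<le> m * K"
      proof (cases "m = 0")
        case True then have "card R = 0" using cR by simp
        then show ?thesis using True by simp
      next
        case False then show ?thesis using K0 cR by (intro mult_right_mono) auto
      qed
      finally show ?thesis by simp
    qed
    finally show ?thesis using int by simp
  qed
  have intw: "\<And>\<sigma>. \<sigma> \<in> P \<Longrightarrow> integrable M (w \<sigma>)"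
    unfolding w_def using subprod by blast
  show int: "integrable M (\<lambda>\<omega>. \<Prod>r<m. \<Sum>t\<in>J. g r t (Y t \<omega>))"
    unfolding expand by (intro Bochner_Integration.integrable_sum intw)
  have E: "expectation (\<lambda>\<omega>. \<Prod>r<m. \<Sum>t\<in>J. g r t (Y t \<omega>)) = (\<Sum>\<sigma>\<in>P. expectation (w \<sigma>))"
    unfolding expand by (intro Bochner_Integration.integral_sum intw)
  have zero: "expectation (w \<sigma>) = 0"
    if \<sigma>: "\<sigma> \<in> P" and t0: "t0 \<in> J" and c1: "card {r. r<m \<and> \<sigma> r = t0} = 1" for \<sigma> t0
  proof -
    from card_1_singleton_iff[THEN iffD1, OF c1[unfolded One_nat_def]] obtain r0 where r0: "{r. r<m \<and> \<sigma> r = t0} = {r0}" ..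
    have r0in: "r0 \<in> {r. r<m \<and> \<sigma> r = t0}" using r0 by simp
    then have r0m: "r0 < m" and sr0: "\<sigma> r0 = t0" by simp_all
    have oth: "\<sigma> r \<in> J - {t0}" if r: "r < m" "r \<noteq> r0" for r
    proof -
      have "\<sigma> r \<noteq> t0"
      proof
        assume "\<sigma> r = t0"
        then have "r \<in> {r. r<m \<and> \<sigma> r = t0}" using r by simp
        then show False using r0 r by simp
      qed
      then show ?thesis using sJ[OF \<sigma> r(1)] by simp
    qed
    have split: "w \<sigma> \<omega> = g r0 t0 (Y t0 \<omega>) * (\<Prod>r\<in>{..<m}-{r0}. g r (\<sigma> r) (Y (\<sigma> r) \<omega>))" for \<omega>
    proof -
      have "w \<sigma> \<omega> = g r0 (\<sigma> r0) (Y (\<sigma> r0) \<omega>) * (\<Prod>r\<in>{..<m}-{r0}. g r (\<sigma> r) (Y (\<sigma> r) \<omega>))"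
        unfolding w_def by (rule prod.remove) (use r0m in auto)
      then show ?thesis using sr0 by simp
    qed
    have iv: "indep_var (Pi\<^sub>M {t0} (\<lambda>_. count_space UNIV)) (\<lambda>\<omega>. restrict (\<lambda>i. Y i \<omega>) {t0})
                 (Pi\<^sub>M (J-{t0}) (\<lambda>_. count_space UNIV)) (\<lambda>\<omega>. restrict (\<lambda>i. Y i \<omega>) (J-{t0}))"
      using t0 by (intro indep_var_restrict[OF ind]) auto
    have m1: "(\<lambda>f. g r0 t0 (f t0)) \<in> borel_measurable (Pi\<^sub>M {t0} (\<lambda>_. count_space UNIV))"
      by (rule measurable_compose[OF measurable_component_singleton]) auto
    have m2: "(\<lambda>f. \<Prod>r\<in>{..<m}-{r0}. g r (\<sigma> r) (f (\<sigma> r))) \<in> borel_measurable (Pi\<^sub>M (J-{t0}) (\<lambda>_. count_space UNIV))"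
      by (intro borel_measurable_prod measurable_compose[OF measurable_component_singleton]) (use oth in \<open>auto simp del: Diff_iff\<close>)
    have iv2: "indep_var borel (\<lambda>\<omega>. g r0 t0 (Y t0 \<omega>)) borel (\<lambda>\<omega>. \<Prod>r\<in>{..<m}-{r0}. g r (\<sigma> r) (Y (\<sigma> r) \<omega>))"
    proof -
      have "indep_var borel ((\<lambda>f. g r0 t0 (f t0)) \<circ> (\<lambda>\<omega>. restrict (\<lambda>i. Y i \<omega>) {t0}))
              borel ((\<lambda>f. \<Prod>r\<in>{..<m}-{r0}. g r (\<sigma> r) (f (\<sigma> r))) \<circ> (\<lambda>\<omega>. restrict (\<lambda>i. Y i \<omega>) (J-{t0})))"
        by (rule indep_var_compose[OF iv m1 m2])
      moreover have "((\<lambda>f. \<Prod>r\<in>{..<m}-{r0}. g r (\<sigma> r) (f (\<sigma> r))) \<circ> (\<lambda>\<omega>. restrict (\<lambda>i. Y i \<omega>) (J-{t0})))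
          = (\<lambda>\<omega>. \<Prod>r\<in>{..<m}-{r0}. g r (\<sigma> r) (Y (\<sigma> r) \<omega>))"
      proof (rule ext)
        fix \<omega>
        show "((\<lambda>f. \<Prod>r\<in>{..<m}-{r0}. g r (\<sigma> r) (f (\<sigma> r))) \<circ> (\<lambda>\<omega>. restrict (\<lambda>i. Y i \<omega>) (J-{t0}))) \<omega>
          = (\<Prod>r\<in>{..<m}-{r0}. g r (\<sigma> r) (Y (\<sigma> r) \<omega>))"
          unfolding comp_def
        proof (rule prod.cong[OF refl])
          fix r assume "r \<in> {..<m}-{r0}"
          then have "\<sigma> r \<in> J-{t0}" using oth by blast
          then show "g r (\<sigma> r) (restrict (\<lambda>i. Y i \<omega>) (J-{t0}) (\<sigma> r)) = g r (\<sigma> r) (Y (\<sigma> r) \<omega>)" by simp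
        qed
      qed
      ultimately show ?thesis by (simp add: comp_def)
    qed
    have intA: "integrable M (\<lambda>\<omega>. g r0 t0 (Y t0 \<omega>))"
    proof (rule Bochner_Integration.integrable_bound)
      show "integrable M (\<lambda>\<omega>. 1 + \<bar>g r0 t0 (Y t0 \<omega>)\<bar>^m)"
        using r0m t0 intm by (intro Bochner_Integration.integrable_add) auto
      show "(\<lambda>\<omega>. g r0 t0 (Y t0 \<omega>)) \<in> borel_measurable M" using t0 meas by auto
      show "AE \<omega> in M. norm (g r0 t0 (Y t0 \<omega>)) \<le> norm (1 + \<bar>g r0 t0 (Y t0 \<omega>)\<bar>^m)"
        using abs_pow_le_1_plus[of 1 m] r0m by auto
    qed
    have intB: "integrable M (\<lambda>\<omega>. \<Prod>r\<in>{..<m}-{r0}. g r (\<sigma> r) (Y (\<sigma> r) \<omega>))"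
      using subprod[OF \<sigma>, of "{..<m}-{r0}"] by auto
    have "expectation (w \<sigma>) = expectation (\<lambda>\<omega>. g r0 t0 (Y t0 \<omega>)) * expectation (\<lambda>\<omega>. \<Prod>r\<in>{..<m}-{r0}. g r (\<sigma> r) (Y (\<sigma> r) \<omega>))"
      unfolding split by (rule indep_var_lebesgue_integral[OF iv2 intA intB])
    then show ?thesis using mean0[OF r0m t0] by simp
  qed
  define B where "B = {\<sigma> \<in> PiE {..<m} (\<lambda>_. J). \<forall>t\<in>J. card {r. r<m \<and> \<sigma> r = t} \<noteq> 1}"
  have "\<bar>\<Sum>\<sigma>\<in>P. expectation (w \<sigma>)\<bar> \<le> (\<Sum>\<sigma>\<in>P. \<bar>expectation (w \<sigma>)\<bar>)" by (rule sum_abs)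
  also have "\<dots> \<le> (\<Sum>\<sigma>\<in>P. if \<sigma> \<in> B then 1 + real m * K else 0)"
  proof (rule sum_mono)
    fix \<sigma> assume \<sigma>: "\<sigma> \<in> P"
    show "\<bar>expectation (w \<sigma>)\<bar> \<le> (if \<sigma> \<in> B then 1 + real m * K else 0)"
    proof (cases "\<sigma> \<in> B")
      case True
      have "\<bar>expectation (w \<sigma>)\<bar> \<le> expectation (\<lambda>\<omega>. \<bar>w \<sigma> \<omega>\<bar>)" by (rule integral_abs_bound)
      also have "\<dots> \<le> 1 + real m * K" using subprod[OF \<sigma>, of "{..<m}"] unfolding w_def by auto
      finally show ?thesis using True by simp
    next
      case False
      then obtain t0 where "t0 \<in> J" "card {r. r<m \<and> \<sigma> r = t0} = 1" using \<sigma> unfolding B_def P_def by auto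
      then show ?thesis using zero[OF \<sigma>] False by simp
    qed
  qed
  also have "\<dots> = (\<Sum>\<sigma>\<in>{\<sigma>\<in>P. \<sigma> \<in> B}. 1 + real m * K)"
    by (rule sum.inter_filter[symmetric, OF finP])
  also have "\<dots> = (\<Sum>\<sigma>\<in>B. 1 + real m * K)"
  proof -
    have "{\<sigma>\<in>P. \<sigma> \<in> B} = B" by (auto simp: B_def P_def)
    then show ?thesis by simp
  qed
  also have "\<dots> = real (card B) * (1 + real m * K)" by simp
  also have "\<dots> \<le> real (m^m * card J ^ (m div 2)) * (1 + real m * K)"
  proof (rule mult_right_mono)
    show "real (card B) \<le> real (m^m * card J ^ (m div 2))" unfolding B_def using count_bound[OF J, of m] by linarith
    show "0 \<le> 1 + real m * K" using K0 by simp
  qed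
  finally show "\<bar>expectation (\<lambda>\<omega>. \<Prod>r<m. \<Sum>t\<in>J. g r t (Y t \<omega>))\<bar>
           \<le> (1 + real m * K) * (m^m * card J ^ (m div 2))" unfolding E by (simp add: mult.commute)
qed

lemma measurable_plus_count:
  fixes f g :: "'x \<Rightarrow> 'b::{countable, plus}"
  assumes "f \<in> measurable N (count_space UNIV)" "g \<in> measurable N (count_space UNIV)"
  shows "(\<lambda>x. f x + g x) \<in> measurable N (count_space UNIV)"
proof -
  have "(\<lambda>x. (\<lambda>i x. i + g x) (f x) x) \<in> measurable N (count_space UNIV)"
  proof (rule measurable_compose_countable[OF _ assms(1)])
    fix i :: 'b
    show "(\<lambda>x. i + g x) \<in> measurable N (count_space UNIV)"
      by (rule measurable_compose[OF assms(2)]) simp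
  qed
  then show ?thesis by simp
qed

lemma measurable_sum_count:
  fixes f :: "'i \<Rightarrow> 'x \<Rightarrow> 'b::{countable, comm_monoid_add}"
  assumes "finite A" "\<And>a. a \<in> A \<Longrightarrow> f a \<in> measurable N (count_space UNIV)"
  shows "(\<lambda>x. \<Sum>a\<in>A. f a x) \<in> measurable N (count_space UNIV)"
  using assms
proof (induction A rule: finite_induct)
  case empty then show ?case by simp
next
  case (insert a A)
  then show ?case by (simp add: measurable_plus_count)
qed

fun tm :: "gw_idx \<Rightarrow> nat" where
  "tm (Xi k j i) = k" | "tm (Eps k) = k"

definition Sset :: "nat \<Rightarrow> gw_idx set" where "Sset k = {t \<in> gw_index_set. tm t \<le> k}"
definition Gen :: "nat \<Rightarrow> gw_idx set" where "Gen k = {t \<in> gw_index_set. tm t = k}"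

definition step :: "nat \<Rightarrow> nat \<times> nat \<Rightarrow> (gw_idx \<Rightarrow> nat \<times> nat) \<Rightarrow> nat \<times> nat" where
  "step k v g = (\<Sum>j\<in>{1..fst v}. g (Xi k j 1)) + (\<Sum>j\<in>{1..snd v}. g (Xi k j 2)) + g (Eps k)"

fun gwd :: "(gw_idx \<Rightarrow> nat \<times> nat) \<Rightarrow> nat \<Rightarrow> nat \<times> nat" where
  "gwd g 0 = (0,0)" | "gwd g (Suc k) = step (Suc k) (gwd g k) g"

lemma Xi_in_index[simp]: "Xi k j i \<in> gw_index_set \<longleftrightarrow> 1 \<le> k \<and> 1 \<le> j \<and> i \<in> {1,2}"
  by (auto simp: gw_index_set_def)
lemma Eps_in_index[simp]: "Eps k \<in> gw_index_set \<longleftrightarrow> 1 \<le> k"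
  by (auto simp: gw_index_set_def)

lemma Sset_Gen_disj: "Sset k \<inter> Gen (Suc k) = {}"
  by (auto simp: Sset_def Gen_def)

lemma measurable_step:
  assumes "\<And>j i. 1 \<le> j \<Longrightarrow> i \<in> {1,2} \<Longrightarrow> Xi k j i \<in> S" "Eps k \<in> S"
  shows "step k v \<in> measurable (PiM S (\<lambda>_. count_space UNIV)) (count_space UNIV)"
proof -
  have c: "\<And>t. t \<in> S \<Longrightarrow> (\<lambda>g. g t) \<in> measurable (PiM S (\<lambda>_. count_space UNIV)) (count_space UNIV)"
    by (rule measurable_component_singleton)
  show ?thesis unfolding step_def
    by (intro measurable_plus_count measurable_sum_count c) (use assms in auto)
qed

lemma measurable_gwd:
  assumes "k \<le> k0"
  shows "(\<lambda>g. gwd g k) \<in> measurable (PiM (Sset k0) (\<lambda>_. count_space UNIV)) (count_space UNIV)"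
  using assms
proof (induction k)
  case 0 show ?case by (simp only: gwd.simps) (rule measurable_count_space_const)
next
  case (Suc k)
  have "(\<lambda>g. (\<lambda>v g. step (Suc k) v g) (gwd g k) g) \<in> measurable (PiM (Sset k0) (\<lambda>_. count_space UNIV)) (count_space UNIV)"
  proof (rule measurable_compose_countable[where f="\<lambda>v g. step (Suc k) v g" and g="\<lambda>g. gwd g k"])
    fix v show "step (Suc k) v \<in> measurable (PiM (Sset k0) (\<lambda>_. count_space UNIV)) (count_space UNIV)"
      by (rule measurable_step) (use Suc.prems in \<open>auto simp: Sset_def\<close>)
    show "(\<lambda>g. gwd g k) \<in> measurable (PiM (Sset k0) (\<lambda>_. count_space UNIV)) (count_space UNIV)"
      using Suc by simp
  qed
  then show ?case by simp
qed

lemma gw_X_rep: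
  assumes "k \<le> k0"
  shows "gw_X \<xi> \<epsilon> k \<omega> = gwd (restrict (\<lambda>t. gw_family \<xi> \<epsilon> t \<omega>) (Sset k0)) k"
  using assms
proof (induction k)
  case 0 then show ?case by simp
next
  case (Suc k)
  let ?g = "restrict (\<lambda>t. gw_family \<xi> \<epsilon> t \<omega>) (Sset k0)"
  have IH: "gw_X \<xi> \<epsilon> k \<omega> = gwd ?g k" using Suc.IH Suc.prems by (simp only: Suc_leD)
  have a: "(\<Sum>j\<in>{1..n}. \<xi> (Suc k) j i \<omega>) = (\<Sum>j\<in>{1..n}. ?g (Xi (Suc k) j i))" if "i \<in> {1,2}" for n i
    by (rule sum.cong) (use Suc.prems that in \<open>auto simp: Sset_def gw_family_def\<close>)
  have b: "\<epsilon> (Suc k) \<omega> = ?g (Eps (Suc k))" using Suc.prems by (auto simp: Sset_def gw_family_def)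
  have a1: "(\<Sum>j\<in>{1..n}. \<xi> (Suc k) j 1 \<omega>) = (\<Sum>j\<in>{1..n}. ?g (Xi (Suc k) j 1))" for n by (rule a) simp
  have a2: "(\<Sum>j\<in>{1..n}. \<xi> (Suc k) j 2 \<omega>) = (\<Sum>j\<in>{1..n}. ?g (Xi (Suc k) j 2))" for n by (rule a) simp
  have "gw_X \<xi> \<epsilon> (Suc k) \<omega> = step (Suc k) (gw_X \<xi> \<epsilon> k \<omega>) ?g"
    by (simp only: gw_X.simps step_def a1 a2 b)
  then show ?case by (simp only: IH gwd.simps)
qed

lemma step_restrict_Gen:
  "step (Suc k) v (restrict (\<lambda>t. gw_family \<xi> \<epsilon> t \<omega>) (Gen (Suc k)))
   = (\<Sum>j\<in>{1..fst v}. \<xi> (Suc k) j 1 \<omega>) + (\<Sum>j\<in>{1..snd v}. \<xi> (Suc k) j 2 \<omega>) + \<epsilon> (Suc k) \<omega>"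
  unfolding step_def by (intro arg_cong2[where f="(+)"] sum.cong) (auto simp: Gen_def gw_family_def)

lemma gw_X_Suc_step:
  "gw_X \<xi> \<epsilon> (Suc k) \<omega> = step (Suc k) (gw_X \<xi> \<epsilon> k \<omega>) (restrict (\<lambda>t. gw_family \<xi> \<epsilon> t \<omega>) (Gen (Suc k)))"
  by (simp add: step_restrict_Gen)

locale gwp = prob_space M for M :: "'a measure" +
  fixes \<xi> :: "nat \<Rightarrow> nat \<Rightarrow> nat \<Rightarrow> 'a \<Rightarrow> nat \<times> nat" and \<epsilon> :: "nat \<Rightarrow> 'a \<Rightarrow> nat \<times> nat"
  assumes indep: "indep_vars (\<lambda>_. count_space UNIV) (gw_family \<xi> \<epsilon>) gw_index_set"
begin

abbreviation "Y \<equiv> gw_family \<xi> \<epsilon>"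
abbreviation "X \<equiv> gw_X \<xi> \<epsilon>"
definition "W k \<omega> = restrict (\<lambda>t. Y t \<omega>) (Gen k)"

abbreviation "PG k \<equiv> PiM (Gen k) (\<lambda>_. count_space UNIV :: (nat \<times> nat) measure)"

lemma rvY: "t \<in> gw_index_set \<Longrightarrow> Y t \<in> measurable M (count_space UNIV)"
  using indep by (auto simp: indep_vars_def)

lemma rvX: "X k \<in> measurable M (count_space UNIV)"
proof -
  have "(\<lambda>\<omega>. (\<lambda>g. gwd g k) (restrict (\<lambda>t. Y t \<omega>) (Sset k))) \<in> measurable M (count_space UNIV)"
    by (rule measurable_compose[OF measurable_restrict measurable_gwd]) (auto simp: Sset_def intro: rvY)
  moreover have "X k = (\<lambda>\<omega>. (\<lambda>g. gwd g k) (restrict (\<lambda>t. Y t \<omega>) (Sset k)))"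
    by (rule ext) (simp only: gw_X_rep[OF order_refl])
  ultimately show ?thesis by simp
qed

lemma rvW: "W k \<in> measurable M (PG k)"
  unfolding W_def by (rule measurable_restrict) (auto simp: Gen_def intro: rvY)

definition "R k \<omega> = restrict (\<lambda>t. Y t \<omega>) (Sset k)"
abbreviation "PS k \<equiv> PiM (Sset k) (\<lambda>_. count_space UNIV :: (nat \<times> nat) measure)"

lemma rvR: "R k \<in> measurable M (PS k)"
  unfolding R_def by (rule measurable_restrict) (auto simp: Sset_def intro: rvY)

lemma X_R: "X k \<omega> = gwd (R k \<omega>) k"
  unfolding R_def by (rule gw_X_rep) simp

lemma indepRW: "indep_var (PS k) (R k) (PG (Suc k)) (W (Suc k))"
  unfolding R_def W_def
  by (rule indep_var_restrict[OF indep Sset_Gen_disj]) (auto simp: Sset_def Gen_def)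

lemma X_Suc: "X (Suc k) \<omega> = step (Suc k) (X k \<omega>) (W (Suc k) \<omega>)"
  unfolding W_def by (rule gw_X_Suc_step)

lemma measurable_step_Gen: "step (Suc k) v \<in> measurable (PG (Suc k)) (count_space UNIV)"
  by (rule measurable_step) (auto simp: Gen_def)

lemma product_distr:
  "distr M (PS k) (R k) \<Otimes>\<^sub>M distr M (PG (Suc k)) (W (Suc k))
    = distr M (PS k \<Otimes>\<^sub>M PG (Suc k)) (\<lambda>\<omega>. (R k \<omega>, W (Suc k) \<omega>))"
  using indepRW[of k] unfolding indep_var_distribution_eq by blast

lemma measurable_H:
  "(\<lambda>p. F (fst p) (step (Suc k) (fst p) (snd p))) \<in> measurable (count_space UNIV \<Otimes>\<^sub>M PG (Suc k)) (N :: 'c measure)"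
  if "\<And>v. F v \<in> measurable (count_space UNIV) N"
proof (rule measurable_pair_measure_countable1)
  fix v :: "nat \<times> nat"
  show "(\<lambda>y. F (fst (v, y)) (step (Suc k) (fst (v, y)) (snd (v, y)))) \<in> measurable (PG (Suc k)) N"
    by simp (rule measurable_compose[OF measurable_step_Gen that])
qed simp

lemma measurable_H2:
  "(\<lambda>p. F (gwd (fst p) k) (step (Suc k) (gwd (fst p) k) (snd p))) \<in> measurable (PS k \<Otimes>\<^sub>M PG (Suc k)) (N :: 'c measure)"
  if "\<And>v. F v \<in> measurable (count_space UNIV) N"
proof -
  have "(\<lambda>p. (gwd (fst p) k, snd p)) \<in> measurable (PS k \<Otimes>\<^sub>M PG (Suc k)) (count_space UNIV \<Otimes>\<^sub>M PG (Suc k))"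
    by (intro measurable_Pair measurable_compose[OF measurable_fst measurable_gwd] measurable_snd) simp
  from measurable_compose[OF this measurable_H[where F=F and k=k and N=N, OF that]] show ?thesis by simp
qed

lemma cond_nn:
  fixes F :: "nat \<times> nat \<Rightarrow> nat \<times> nat \<Rightarrow> ennreal"
  shows "(\<integral>\<^sup>+\<omega>. F (X k \<omega>) (X (Suc k) \<omega>) \<partial>M)
       = (\<integral>\<^sup>+\<omega>. (\<integral>\<^sup>+\<omega>'. F (X k \<omega>) (step (Suc k) (X k \<omega>) (W (Suc k) \<omega>')) \<partial>M) \<partial>M)"
proof -
  let ?DX = "distr M (PS k) (R k)"
  let ?DW = "distr M (PG (Suc k)) (W (Suc k))"
  let ?H = "\<lambda>p. F (gwd (fst p) k) (step (Suc k) (gwd (fst p) k) (snd p))"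
  have Hm: "?H \<in> borel_measurable (PS k \<Otimes>\<^sub>M PG (Suc k))"
    by (rule measurable_H2) simp
  interpret DW: prob_space ?DW by (rule prob_space_distr[OF rvW])
  have pm: "(\<lambda>\<omega>. (R k \<omega>, W (Suc k) \<omega>)) \<in> measurable M (PS k \<Otimes>\<^sub>M PG (Suc k))"
    by (auto intro!: measurable_Pair rvR rvW)
  have "(\<integral>\<^sup>+\<omega>. F (X k \<omega>) (X (Suc k) \<omega>) \<partial>M) = (\<integral>\<^sup>+\<omega>. ?H (R k \<omega>, W (Suc k) \<omega>) \<partial>M)"
    by (simp only: X_Suc) (simp only: X_R fst_conv snd_conv)
  also have "\<dots> = integral\<^sup>N (distr M (PS k \<Otimes>\<^sub>M PG (Suc k)) (\<lambda>\<omega>. (R k \<omega>, W (Suc k) \<omega>))) ?H"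
    by (rule nn_integral_distr[symmetric, OF pm]) (use Hm in simp)
  also have "\<dots> = integral\<^sup>N (?DX \<Otimes>\<^sub>M ?DW) ?H" by (simp only: product_distr)
  also have "\<dots> = (\<integral>\<^sup>+x. \<integral>\<^sup>+y. ?H (x, y) \<partial>?DW \<partial>?DX)"
    by (rule DW.nn_integral_fst[symmetric]) (use Hm in simp)
  also have "\<dots> = (\<integral>\<^sup>+x. \<integral>\<^sup>+\<omega>'. ?H (x, W (Suc k) \<omega>') \<partial>M \<partial>?DX)"
  proof (rule nn_integral_cong)
    fix x show "(\<integral>\<^sup>+y. ?H (x, y) \<partial>?DW) = (\<integral>\<^sup>+\<omega>'. ?H (x, W (Suc k) \<omega>') \<partial>M)"
      by (rule nn_integral_distr[OF rvW]) (simp only: fst_conv snd_conv measurable_distr_eq1, rule measurable_compose[OF measurable_step_Gen], simp)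
  qed
  also have "\<dots> = (\<integral>\<^sup>+\<omega>. \<integral>\<^sup>+\<omega>'. ?H (R k \<omega>, W (Suc k) \<omega>') \<partial>M \<partial>M)"
  proof (rule nn_integral_distr[OF rvR])
    show "(\<lambda>x. \<integral>\<^sup>+\<omega>'. ?H (x, W (Suc k) \<omega>') \<partial>M) \<in> borel_measurable ?DX"
    proof -
      have "(\<lambda>x. (\<lambda>v. \<integral>\<^sup>+\<omega>'. F v (step (Suc k) v (W (Suc k) \<omega>')) \<partial>M) (gwd x k)) \<in> borel_measurable (PS k)"
        by (rule measurable_compose[OF measurable_gwd]) auto
      then show ?thesis by simp
    qed
  qed
  finally show ?thesis by (simp add: X_R)
qed

lemma cond_L:
  fixes F :: "nat \<times> nat \<Rightarrow> nat \<times> nat \<Rightarrow> real"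
  assumes int: "integrable M (\<lambda>\<omega>. F (X k \<omega>) (X (Suc k) \<omega>))"
  shows "(\<integral>\<omega>. F (X k \<omega>) (X (Suc k) \<omega>) \<partial>M)
       = (\<integral>\<omega>. (\<integral>\<omega>'. F (X k \<omega>) (step (Suc k) (X k \<omega>) (W (Suc k) \<omega>')) \<partial>M) \<partial>M)"
proof -
  let ?DX = "distr M (PS k) (R k)"
  let ?DW = "distr M (PG (Suc k)) (W (Suc k))"
  let ?P = "distr M (PS k \<Otimes>\<^sub>M PG (Suc k)) (\<lambda>\<omega>. (R k \<omega>, W (Suc k) \<omega>))"
  let ?H = "\<lambda>p. F (gwd (fst p) k) (step (Suc k) (gwd (fst p) k) (snd p))"
  have Hm: "?H \<in> borel_measurable (PS k \<Otimes>\<^sub>M PG (Suc k))"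
    by (rule measurable_H2) simp
  interpret DW: prob_space ?DW by (rule prob_space_distr[OF rvW])
  interpret DX: prob_space ?DX by (rule prob_space_distr[OF rvR])
  interpret PSF: pair_sigma_finite ?DX ?DW ..
  have pm: "(\<lambda>\<omega>. (R k \<omega>, W (Suc k) \<omega>)) \<in> measurable M (PS k \<Otimes>\<^sub>M PG (Suc k))"
    by (auto intro!: measurable_Pair rvR rvW)
  have intP: "integrable ?P ?H"
    using int by (subst integrable_distr_eq[OF pm Hm]) (simp only: X_Suc, simp only: X_R fst_conv snd_conv)
  have "(\<integral>\<omega>. F (X k \<omega>) (X (Suc k) \<omega>) \<partial>M) = (\<integral>\<omega>. ?H (R k \<omega>, W (Suc k) \<omega>) \<partial>M)"
    by (simp only: X_Suc) (simp only: X_R fst_conv snd_conv)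
  also have "\<dots> = integral\<^sup>L ?P ?H"
    by (rule integral_distr[symmetric, OF pm]) (use Hm in simp)
  also have "\<dots> = integral\<^sup>L (?DX \<Otimes>\<^sub>M ?DW) ?H" by (simp only: product_distr)
  also have "\<dots> = (\<integral>x. \<integral>y. ?H (x, y) \<partial>?DW \<partial>?DX)"
    by (rule PSF.integral_fst'[symmetric]) (use intP in \<open>simp only: product_distr\<close>)
  also have "\<dots> = (\<integral>x. \<integral>\<omega>'. ?H (x, W (Suc k) \<omega>') \<partial>M \<partial>?DX)"
  proof (rule Bochner_Integration.integral_cong[OF refl])
    fix x show "(\<integral>y. ?H (x, y) \<partial>?DW) = (\<integral>\<omega>'. ?H (x, W (Suc k) \<omega>') \<partial>M)"
      by (rule integral_distr[OF rvW]) (simp only: fst_conv snd_conv measurable_distr_eq1, rule measurable_compose[OF measurable_step_Gen], simp)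
  qed
  also have "\<dots> = (\<integral>\<omega>. \<integral>\<omega>'. ?H (R k \<omega>, W (Suc k) \<omega>') \<partial>M \<partial>M)"
  proof (rule integral_distr[OF rvR])
    have "(\<lambda>x. (\<lambda>v. \<integral>\<omega>'. F v (step (Suc k) v (W (Suc k) \<omega>')) \<partial>M) (gwd x k)) \<in> borel_measurable (PS k)"
      by (rule measurable_compose[OF measurable_gwd]) auto
    then show "(\<lambda>x. \<integral>\<omega>'. ?H (x, W (Suc k) \<omega>') \<partial>M) \<in> borel_measurable (PS k)" by simp
  qed
  finally show ?thesis by (simp add: X_R)
qed

end

lemma pow_sum_le2: fixes x y :: real assumes "0 \<le> x" "0 \<le> y" shows "(x + y)^n \<le> 2^n * (x^n + y^n)"
proof -
  have "(x + y)^n \<le> (2 * max x y)^n" using assms by (intro power_mono) auto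
  also have "\<dots> = 2^n * (max x y)^n" by (simp add: power_mult_distrib)
  also have "(max x y)^n \<le> x^n + y^n" using assms by (cases "x \<le> y") (auto simp: max_def)
  then have "2^n * (max x y)^n \<le> 2^n * (x^n + y^n)" by simp
  finally show ?thesis .
qed

definition lin :: "real \<times> real \<Rightarrow> nat \<times> nat \<Rightarrow> real" where
  "lin c p = fst c * real (fst p) + snd c * real (snd p)"

lemma lin_add: "lin c (p + q) = lin c p + lin c q"
  by (simp add: lin_def algebra_simps)

lemma lin_sum: "lin c (\<Sum>x\<in>A. f x) = (\<Sum>x\<in>A. lin c (f x))"
  by (simp add: lin_def fst_sum snd_sum sum_distrib_left sum.distrib)

lemma lin_bound:
  assumes "\<bar>fst c\<bar> \<le> 1" "\<bar>snd c\<bar> \<le> 1"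
  shows "\<bar>lin c p\<bar> \<le> 2 * norm (vec_real p)"
proof -
  have f: "\<bar>real (fst p)\<bar> \<le> norm (vec_real p)"
    using norm_fst_le[of "real (fst p)" "real (snd p)"] by (simp add: vec_real_def)
  have s: "\<bar>real (snd p)\<bar> \<le> norm (vec_real p)"
    using norm_snd_le[of "real (snd p)" "real (fst p)"] by (simp add: vec_real_def)
  have "\<bar>lin c p\<bar> \<le> \<bar>fst c\<bar> * \<bar>real (fst p)\<bar> + \<bar>snd c\<bar> * \<bar>real (snd p)\<bar>"
    using abs_triangle_ineq[of "fst c * real (fst p)" "snd c * real (snd p)"] unfolding lin_def abs_mult .
  also have "\<dots> \<le> 1 * norm (vec_real p) + 1 * norm (vec_real p)"
    using assms f s by (intro add_mono mult_mono) auto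
  finally show ?thesis by simp
qed

locale gwp2 = gwp +
  fixes \<alpha> \<beta> :: real and l :: nat
  assumes ident_xi: "\<And>k j i. 1 \<le> k \<Longrightarrow> 1 \<le> j \<Longrightarrow> i \<in> {1,2} \<Longrightarrow>
                     distr M (count_space UNIV) (\<xi> k j i) = distr M (count_space UNIV) (\<xi> 1 1 i)"
    and ident_eps: "\<And>k. 1 \<le> k \<Longrightarrow>
                     distr M (count_space UNIV) (\<epsilon> k) = distr M (count_space UNIV) (\<epsilon> 1)"
    and alpha: "0 < \<alpha>" "\<alpha> < 1" and beta: "0 < \<beta>" "\<beta> < 1" and alphabeta: "\<alpha> + \<beta> = 1"
    and mean1: "expectation (\<lambda>\<omega>. real (fst (\<xi> 1 1 1 \<omega>))) = \<alpha>"
               "expectation (\<lambda>\<omega>. real (snd (\<xi> 1 1 1 \<omega>))) = \<beta>"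
    and mean2: "expectation (\<lambda>\<omega>. real (fst (\<xi> 1 1 2 \<omega>))) = \<beta>"
               "expectation (\<lambda>\<omega>. real (snd (\<xi> 1 1 2 \<omega>))) = \<alpha>"
    and l_pos: "1 \<le> l"
    and mom: "integrable M (\<lambda>\<omega>. norm (vec_real (\<xi> 1 1 1 \<omega>)) ^ l)"
             "integrable M (\<lambda>\<omega>. norm (vec_real (\<xi> 1 1 2 \<omega>)) ^ l)"
             "integrable M (\<lambda>\<omega>. norm (vec_real (\<epsilon> 1 \<omega>)) ^ l)"
begin

definition "base t = (case t of Xi k j i \<Rightarrow> \<xi> 1 1 i | Eps k \<Rightarrow> \<epsilon> 1)"
definition "me1 = expectation (\<lambda>\<omega>. real (fst (\<epsilon> 1 \<omega>)))"
definition "me2 = expectation (\<lambda>\<omega>. real (snd (\<epsilon> 1 \<omega>)))"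
definition "NB = expectation (\<lambda>\<omega>. norm (vec_real (\<xi> 1 1 1 \<omega>)) ^ l)
   + expectation (\<lambda>\<omega>. norm (vec_real (\<xi> 1 1 2 \<omega>)) ^ l) + expectation (\<lambda>\<omega>. norm (vec_real (\<epsilon> 1 \<omega>)) ^ l)"
definition "mu0 = 1 + \<bar>\<alpha>\<bar> + \<bar>\<beta>\<bar> + \<bar>me1\<bar> + \<bar>me2\<bar>"
definition "Kc = 1 + 2^l * mu0^l + 4^l * NB"

lemma Y_Xi: "Y (Xi k j i) = \<xi> k j i" by (simp add: gw_family_def fun_eq_iff)
lemma Y_Eps: "Y (Eps k) = \<epsilon> k" by (simp add: gw_family_def fun_eq_iff)

lemma base_Y: "t \<in> gw_index_set \<Longrightarrow> base t = Y (case t of Xi k j i \<Rightarrow> Xi 1 1 i | Eps k \<Rightarrow> Eps 1)"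
  by (cases t) (auto simp: base_def gw_family_def)

lemma rv_base: "t \<in> gw_index_set \<Longrightarrow> base t \<in> measurable M (count_space UNIV)"
  by (subst base_Y) (auto intro!: rvY split: gw_idx.splits)

lemma distr_base: "t \<in> gw_index_set \<Longrightarrow> distr M (count_space UNIV) (Y t) = distr M (count_space UNIV) (base t)"
proof (cases t)
  case (Xi k j i)
  assume "t \<in> gw_index_set"
  then show ?thesis using Xi by (simp only: Y_Xi base_def gw_idx.case) (rule ident_xi, auto)
next
  case (Eps k)
  assume "t \<in> gw_index_set"
  then show ?thesis using Eps by (simp only: Y_Eps base_def gw_idx.case) (rule ident_eps, auto)
qed

lemma transfer:
  fixes h :: "nat \<times> nat \<Rightarrow> real"
  assumes t: "t \<in> gw_index_set"
  shows "integrable M (\<lambda>\<omega>. h (Y t \<omega>)) \<longleftrightarrow> integrable M (\<lambda>\<omega>. h (base t \<omega>))"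
    and "expectation (\<lambda>\<omega>. h (Y t \<omega>)) = expectation (\<lambda>\<omega>. h (base t \<omega>))"
proof -
  have "integrable M (\<lambda>\<omega>. h (Y t \<omega>)) \<longleftrightarrow> integrable (distr M (count_space UNIV) (Y t)) h"
    by (rule integrable_distr_eq[symmetric, OF rvY[OF t]]) simp
  also have "\<dots> \<longleftrightarrow> integrable (distr M (count_space UNIV) (base t)) h" by (simp only: distr_base[OF t])
  also have "\<dots> \<longleftrightarrow> integrable M (\<lambda>\<omega>. h (base t \<omega>))"
    by (rule integrable_distr_eq[OF rv_base[OF t]]) simp
  finally show "integrable M (\<lambda>\<omega>. h (Y t \<omega>)) \<longleftrightarrow> integrable M (\<lambda>\<omega>. h (base t \<omega>))" .
  have "expectation (\<lambda>\<omega>. h (Y t \<omega>)) = integral\<^sup>L (distr M (count_space UNIV) (Y t)) h"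
    by (rule integral_distr[symmetric, OF rvY[OF t]]) simp
  also have "\<dots> = integral\<^sup>L (distr M (count_space UNIV) (base t)) h" by (simp only: distr_base[OF t])
  also have "\<dots> = expectation (\<lambda>\<omega>. h (base t \<omega>))"
    by (rule integral_distr[OF rv_base[OF t]]) simp
  finally show "expectation (\<lambda>\<omega>. h (Y t \<omega>)) = expectation (\<lambda>\<omega>. h (base t \<omega>))" .
qed

lemma mom_base: "t \<in> gw_index_set \<Longrightarrow> integrable M (\<lambda>\<omega>. norm (vec_real (base t \<omega>)) ^ l)"
proof (cases t)
  case (Xi k j i)
  assume "t \<in> gw_index_set"
  then have "i = 1 \<or> i = 2" using Xi by auto
  then show ?thesis using Xi mom by (auto simp only: base_def gw_idx.case)
next
  case (Eps k)
  then show ?thesis using mom by (simp only: base_def gw_idx.case)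
qed

lemma NB_bound: "t \<in> gw_index_set \<Longrightarrow> expectation (\<lambda>\<omega>. norm (vec_real (base t \<omega>)) ^ l) \<le> NB"
proof -
  have n1: "0 \<le> expectation (\<lambda>\<omega>. norm (vec_real (\<xi> 1 1 1 \<omega>)) ^ l)" by (intro integral_nonneg_AE) auto
  have n2: "0 \<le> expectation (\<lambda>\<omega>. norm (vec_real (\<xi> 1 1 2 \<omega>)) ^ l)" by (intro integral_nonneg_AE) auto
  have n3: "0 \<le> expectation (\<lambda>\<omega>. norm (vec_real (\<epsilon> 1 \<omega>)) ^ l)" by (intro integral_nonneg_AE) auto
  assume "t \<in> gw_index_set"
  then show ?thesis using n1 n2 n3 by (cases t) (auto simp: base_def NB_def)
qed

lemma NB_nonneg: "0 \<le> NB"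
proof -
  have n1: "0 \<le> expectation (\<lambda>\<omega>. norm (vec_real (\<xi> 1 1 1 \<omega>)) ^ l)" by (intro integral_nonneg_AE) auto
  have n2: "0 \<le> expectation (\<lambda>\<omega>. norm (vec_real (\<xi> 1 1 2 \<omega>)) ^ l)" by (intro integral_nonneg_AE) auto
  have n3: "0 \<le> expectation (\<lambda>\<omega>. norm (vec_real (\<epsilon> 1 \<omega>)) ^ l)" by (intro integral_nonneg_AE) auto
  show ?thesis unfolding NB_def using n1 n2 n3 by linarith
qed

lemma mu0_ge1: "1 \<le> mu0" unfolding mu0_def by simp

lemma Kc_ge1: "1 \<le> Kc" unfolding Kc_def using NB_nonneg mu0_ge1 by (simp add: add_nonneg_nonneg)

lemma mom_lin:
  assumes t: "t \<in> gw_index_set" and c: "\<bar>fst c\<bar> \<le> 1" "\<bar>snd c\<bar> \<le> 1" and mu: "\<bar>\<mu>\<bar> \<le> mu0" and i: "i \<le> l"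
  shows "integrable M (\<lambda>\<omega>. \<bar>lin c (Y t \<omega>) - \<mu>\<bar>^i)"
    and "expectation (\<lambda>\<omega>. \<bar>lin c (Y t \<omega>) - \<mu>\<bar>^i) \<le> Kc"
proof -
  let ?N = "\<lambda>\<omega>. norm (vec_real (base t \<omega>))"
  let ?B = "\<lambda>\<omega>. 1 + 2^l * mu0^l + 4^l * ?N \<omega> ^ l"
  have bnd: "\<bar>lin c (base t \<omega>) - \<mu>\<bar>^i \<le> ?B \<omega>" for \<omega>
  proof -
    have "\<bar>lin c (base t \<omega>) - \<mu>\<bar> \<le> 2 * ?N \<omega> + mu0"
      using lin_bound[OF c, of "base t \<omega>"] mu by linarith
    then have "\<bar>lin c (base t \<omega>) - \<mu>\<bar>^l \<le> (2 * ?N \<omega> + mu0)^l" by (intro power_mono) auto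
    also have "\<dots> \<le> 2^l * ((2 * ?N \<omega>)^l + mu0^l)" using mu0_ge1 by (intro pow_sum_le2) auto
    also have "\<dots> = 2^l * mu0^l + 4^l * ?N \<omega> ^ l"
    proof -
      have a: "(2 * ?N \<omega>)^l = 2^l * ?N \<omega>^l" by (rule power_mult_distrib)
      have b: "(4::real)^l = 2^l * 2^l" by (simp flip: power_mult_distrib)
      show ?thesis unfolding a b by (simp add: algebra_simps)
    qed
    finally have "\<bar>lin c (base t \<omega>) - \<mu>\<bar>^l \<le> 2^l * mu0^l + 4^l * ?N \<omega> ^ l" .
    moreover have "\<bar>lin c (base t \<omega>) - \<mu>\<bar>^i \<le> 1 + \<bar>lin c (base t \<omega>) - \<mu>\<bar>^l" by (rule abs_pow_le_1_plus[OF i])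
    ultimately show ?thesis by linarith
  qed
  have intB: "integrable M ?B" using mom_base[OF t] by simp
  have meas: "(\<lambda>\<omega>. \<bar>lin c (base t \<omega>) - \<mu>\<bar>^i) \<in> borel_measurable M"
    by (rule measurable_compose[OF rv_base[OF t]]) simp
  have intb: "integrable M (\<lambda>\<omega>. \<bar>lin c (base t \<omega>) - \<mu>\<bar>^i)"
    by (rule Bochner_Integration.integrable_bound[OF intB meas]) (auto intro!: AE_I2 order_trans[OF _ abs_ge_self] bnd)
  show "integrable M (\<lambda>\<omega>. \<bar>lin c (Y t \<omega>) - \<mu>\<bar>^i)"
    using intb transfer(1)[OF t, of "\<lambda>p. \<bar>lin c p - \<mu>\<bar>^i"] by simp
  have "expectation (\<lambda>\<omega>. \<bar>lin c (Y t \<omega>) - \<mu>\<bar>^i) = expectation (\<lambda>\<omega>. \<bar>lin c (base t \<omega>) - \<mu>\<bar>^i)"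
    by (rule transfer(2)[OF t])
  also have "\<dots> \<le> expectation ?B" by (intro integral_mono intb intB bnd)
  also have "\<dots> = 1 + 2^l * mu0^l + 4^l * expectation (\<lambda>\<omega>. ?N \<omega> ^ l)"
    using mom_base[OF t] by (simp add: prob_space)
  also have "\<dots> \<le> Kc" unfolding Kc_def using NB_bound[OF t] by simp
  finally show "expectation (\<lambda>\<omega>. \<bar>lin c (Y t \<omega>) - \<mu>\<bar>^i) \<le> Kc" .
qed

end

definition Jset :: "nat \<Rightarrow> nat \<times> nat \<Rightarrow> gw_idx set" where
  "Jset k v = (\<lambda>j. Xi k j 1) ` {1..fst v} \<union> (\<lambda>j. Xi k j 2) ` {1..snd v} \<union> {Eps k}"

lemma Jset_sub: "1 \<le> k \<Longrightarrow> Jset k v \<subseteq> gw_index_set"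
  by (auto simp: Jset_def)

lemma Jset_finite: "finite (Jset k v)" by (simp add: Jset_def)

lemma sum_Jset:
  "(\<Sum>t\<in>Jset k v. f t) = (\<Sum>j\<in>{1..fst v}. f (Xi k j 1)) + (\<Sum>j\<in>{1..snd v}. f (Xi k j 2)) + f (Eps k)"
proof -
  have d1: "(\<lambda>j. Xi k j 1) ` {1..fst v} \<inter> (\<lambda>j. Xi k j 2) ` {1..snd v} = {}" by auto
  have d2: "((\<lambda>j. Xi k j 1) ` {1..fst v} \<union> (\<lambda>j. Xi k j 2) ` {1..snd v}) \<inter> {Eps k} = {}" by auto
  have i1: "inj_on (\<lambda>j. Xi k j 1) {1..fst v}" by (auto simp: inj_on_def)
  have i2: "inj_on (\<lambda>j. Xi k j 2) {1..snd v}" by (auto simp: inj_on_def)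
  let ?A1 = "(\<lambda>j. Xi k j 1) ` {1..fst v}" and ?A2 = "(\<lambda>j. Xi k j 2) ` {1..snd v}"
  have s1: "(\<Sum>t\<in>(?A1 \<union> ?A2) \<union> {Eps k}. f t) = (\<Sum>t\<in>?A1 \<union> ?A2. f t) + (\<Sum>t\<in>{Eps k}. f t)"
    by (rule sum.union_disjoint[OF _ _ d2]) auto
  have s2: "(\<Sum>t\<in>?A1 \<union> ?A2. f t) = (\<Sum>t\<in>?A1. f t) + (\<Sum>t\<in>?A2. f t)"
    by (rule sum.union_disjoint[OF _ _ d1]) auto
  have s3: "(\<Sum>t\<in>?A1. f t) = (\<Sum>j\<in>{1..fst v}. f (Xi k j 1))"
    using sum.reindex[OF i1, of f] by (simp add: comp_def)
  have s4: "(\<Sum>t\<in>?A2. f t) = (\<Sum>j\<in>{1..snd v}. f (Xi k j 2))"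
    using sum.reindex[OF i2, of f] by (simp add: comp_def)
  show ?thesis unfolding Jset_def s1 s2 s3 s4 by simp
qed

lemma card_Jset: "card (Jset k v) = fst v + snd v + 1"
  using sum_Jset[of "\<lambda>_. (1::nat)" k v] by simp

context gwp2
begin

lemma lin_step: "lin c (step (Suc k) v (W (Suc k) \<omega>)) = (\<Sum>t\<in>Jset (Suc k) v. lin c (Y t \<omega>))"
  unfolding W_def step_restrict_Gen sum_Jset lin_add lin_sum Y_Xi Y_Eps ..

definition "mu c t = expectation (\<lambda>\<omega>. lin c (Y t \<omega>))"

definition "mval c t = (case t of Xi k j i \<Rightarrow> (if i = 1 then fst c * \<alpha> + snd c * \<beta> else fst c * \<beta> + snd c * \<alpha>)
                          | Eps k \<Rightarrow> fst c * me1 + snd c * me2)"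

lemma int_lin:
  assumes t: "t \<in> gw_index_set" and c: "\<bar>fst c\<bar> \<le> 1" "\<bar>snd c\<bar> \<le> 1"
  shows "integrable M (\<lambda>\<omega>. lin c (Y t \<omega>))"
proof -
  have "integrable M (\<lambda>\<omega>. \<bar>lin c (Y t \<omega>) - 0\<bar>^1)"
    by (rule mom_lin(1)[OF t c]) (use mu0_ge1 l_pos in auto)
  then have "integrable M (\<lambda>\<omega>. \<bar>lin c (Y t \<omega>)\<bar>)" by simp
  moreover have "(\<lambda>\<omega>. lin c (Y t \<omega>)) \<in> borel_measurable M"
    by (rule measurable_compose[OF rvY[OF t]]) simp
  ultimately show ?thesis by (simp add: integrable_abs_iff)
qed

lemma int_base_fst: "t \<in> gw_index_set \<Longrightarrow> integrable M (\<lambda>\<omega>. real (fst (base t \<omega>)))"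
  using int_lin[of t "(1,0)"] transfer(1)[of t "lin (1,0)"] by (simp add: lin_def)
lemma int_base_snd: "t \<in> gw_index_set \<Longrightarrow> integrable M (\<lambda>\<omega>. real (snd (base t \<omega>)))"
  using int_lin[of t "(0,1)"] transfer(1)[of t "lin (0,1)"] by (simp add: lin_def)

lemma mu_eq:
  assumes t: "t \<in> gw_index_set"
  shows "mu c t = mval c t"
proof -
  have "mu c t = expectation (\<lambda>\<omega>. lin c (base t \<omega>))" unfolding mu_def by (rule transfer(2)[OF t])
  also have "\<dots> = fst c * expectation (\<lambda>\<omega>. real (fst (base t \<omega>))) + snd c * expectation (\<lambda>\<omega>. real (snd (base t \<omega>)))"
    unfolding lin_def using int_base_fst[OF t] int_base_snd[OF t] by simp
  also have "\<dots> = mval c t"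
  proof (cases t)
    case (Xi k j i)
    then have "i = 1 \<or> i = 2" using t by auto
    then show ?thesis using Xi mean1 mean2 by (auto simp: base_def mval_def)
  next
    case (Eps k)
    then show ?thesis by (simp add: base_def mval_def me1_def me2_def)
  qed
  finally show ?thesis .
qed

lemma mval_bound: "\<bar>fst c\<bar> \<le> 1 \<Longrightarrow> \<bar>snd c\<bar> \<le> 1 \<Longrightarrow> \<bar>mval c t\<bar> \<le> mu0"
proof -
  assume c: "\<bar>fst c\<bar> \<le> 1" "\<bar>snd c\<bar> \<le> 1"
  have b: "\<bar>x * a + y * b\<bar> \<le> \<bar>a\<bar> + \<bar>b\<bar>" if "\<bar>x\<bar> \<le> 1" "\<bar>y\<bar> \<le> 1" for x y a b :: real
  proof -
    have "\<bar>x * a\<bar> \<le> \<bar>a\<bar>" using that by (simp add: abs_mult mult_left_le_one_le)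
    moreover have "\<bar>y * b\<bar> \<le> \<bar>b\<bar>" using that by (simp add: abs_mult mult_left_le_one_le)
    ultimately show ?thesis by linarith
  qed
  have "\<bar>mval c t\<bar> \<le> \<bar>\<alpha>\<bar> + \<bar>\<beta>\<bar> + \<bar>me1\<bar> + \<bar>me2\<bar>"
  proof (cases t)
    case (Xi k j i)
    show ?thesis
    proof (cases "i = 1")
      case True then show ?thesis using Xi b[OF c, of \<alpha> \<beta>] by (simp add: mval_def)
    next
      case False then show ?thesis using Xi b[OF c, of \<beta> \<alpha>] by (simp add: mval_def)
    qed
  next
    case (Eps k) then show ?thesis using b[OF c, of me1 me2] by (simp add: mval_def)
  qed
  then show ?thesis unfolding mu0_def by linarith
qed

lemma sum_mval:
  "(\<Sum>t\<in>Jset k v. mval c t) = real (fst v) * (fst c * \<alpha> + snd c * \<beta>) + real (snd v) * (fst c * \<beta> + snd c * \<alpha>)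
      + (fst c * me1 + snd c * me2)"
  unfolding sum_Jset by (simp add: mval_def)

lemma per_v:
  fixes cr :: "nat \<Rightarrow> real \<times> real"
  assumes cr: "\<And>r. r < m \<Longrightarrow> \<bar>fst (cr r)\<bar> \<le> 1 \<and> \<bar>snd (cr r)\<bar> \<le> 1" and ml: "m \<le> l"
  shows "integrable M (\<lambda>\<omega>. \<Prod>r<m. (lin (cr r) (step (Suc k) v (W (Suc k) \<omega>)) - (\<Sum>t\<in>Jset (Suc k) v. mval (cr r) t)))"
    and "\<bar>expectation (\<lambda>\<omega>. \<Prod>r<m. (lin (cr r) (step (Suc k) v (W (Suc k) \<omega>)) - (\<Sum>t\<in>Jset (Suc k) v. mval (cr r) t)))\<bar>
          \<le> (1 + l * Kc) * (real l ^ l * real (fst v + snd v + 1) ^ (m div 2))"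
proof -
  let ?J = "Jset (Suc k) v"
  have Jsub: "?J \<subseteq> gw_index_set" by (rule Jset_sub) simp
  define g where "g = (\<lambda>r t p. lin (cr r) p - mval (cr r) t)"
  have eq: "(\<lambda>\<omega>. \<Prod>r<m. (lin (cr r) (step (Suc k) v (W (Suc k) \<omega>)) - (\<Sum>t\<in>?J. mval (cr r) t)))
        = (\<lambda>\<omega>. \<Prod>r<m. \<Sum>t\<in>?J. g r t (Y t \<omega>))"
    unfolding lin_step g_def by (simp add: sum_subtractf)
  have ind: "indep_vars (\<lambda>_. count_space UNIV) Y ?J" by (rule indep_vars_subset[OF indep Jsub])
  have mean0: "expectation (\<lambda>\<omega>. g r t (Y t \<omega>)) = 0" if "r < m" "t \<in> ?J" for r t
  proof -
    have t: "t \<in> gw_index_set" using that Jsub by auto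
    have "expectation (\<lambda>\<omega>. g r t (Y t \<omega>)) = mu (cr r) t - mval (cr r) t"
      unfolding g_def mu_def using int_lin[OF t] cr[OF that(1)] by (simp add: prob_space)
    then show ?thesis using mu_eq[OF t] by simp
  qed
  have intm: "integrable M (\<lambda>\<omega>. \<bar>g r t (Y t \<omega>)\<bar>^m)" if "r < m" "t \<in> ?J" for r t
    unfolding g_def using that Jsub cr[OF that(1)] ml mval_bound[of "cr r" t]
    by (intro mom_lin(1)) auto
  have momK: "expectation (\<lambda>\<omega>. \<bar>g r t (Y t \<omega>)\<bar>^m) \<le> Kc" if "r < m" "t \<in> ?J" for r t
    unfolding g_def using that Jsub cr[OF that(1)] ml mval_bound[of "cr r" t]
    by (intro mom_lin(2)) auto
  have Kc0: "0 \<le> Kc" using Kc_ge1 by simp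
  note C = core[OF ind Jset_finite mean0 intm momK Kc0]
  show "integrable M (\<lambda>\<omega>. \<Prod>r<m. (lin (cr r) (step (Suc k) v (W (Suc k) \<omega>)) - (\<Sum>t\<in>?J. mval (cr r) t)))"
    unfolding eq by (rule C(1))
  have "\<bar>expectation (\<lambda>\<omega>. \<Prod>r<m. (lin (cr r) (step (Suc k) v (W (Suc k) \<omega>)) - (\<Sum>t\<in>?J. mval (cr r) t)))\<bar>
       \<le> (1 + real m * Kc) * (real (m ^ m) * real (card ?J ^ (m div 2)))"
    unfolding eq using C(2) by simp
  also have "\<dots> \<le> (1 + l * Kc) * (real l ^ l * real (fst v + snd v + 1) ^ (m div 2))"
  proof (rule mult_mono)
    show "1 + real m * Kc \<le> 1 + real l * Kc" using ml Kc0 by (intro add_left_mono mult_right_mono) auto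
    have "m ^ m \<le> l ^ m" using ml by (rule power_mono) simp
    also have "\<dots> \<le> l ^ l" using ml l_pos by (intro power_increasing) auto
    finally have "m ^ m \<le> l ^ l" .
    then have "real (m ^ m) \<le> real l ^ l" by (metis of_nat_le_iff of_nat_power)
    moreover have e: "real (card ?J ^ (m div 2)) = real (fst v + snd v + 1) ^ (m div 2)" by (simp add: card_Jset)
    ultimately show "real (m ^ m) * real (card ?J ^ (m div 2)) \<le> real l ^ l * real (fst v + snd v + 1) ^ (m div 2)"
      unfolding e by (intro mult_right_mono) simp_all
  qed (use Kc0 in auto)
  finally show "\<bar>expectation (\<lambda>\<omega>. \<Prod>r<m. (lin (cr r) (step (Suc k) v (W (Suc k) \<omega>)) - (\<Sum>t\<in>?J. mval (cr r) t)))\<bar>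
          \<le> (1 + l * Kc) * (real l ^ l * real (fst v + snd v + 1) ^ (m div 2))" by (simp add: mult.assoc)
qed

end

context gwp2
begin

lemma measurable_FXX: "(\<lambda>\<omega>. F (X k \<omega>) (X (Suc k) \<omega>) :: real) \<in> borel_measurable M"
proof -
  have "(\<lambda>\<omega>. (\<lambda>v \<omega>. F v (X (Suc k) \<omega>)) (X k \<omega>) \<omega>) \<in> borel_measurable M"
  proof (rule measurable_compose_countable[where f="\<lambda>v \<omega>. F v (X (Suc k) \<omega>)" and g="X k"])
    fix v :: "nat \<times> nat"
    show "(\<lambda>\<omega>. F v (X (Suc k) \<omega>)) \<in> borel_measurable M" by (rule measurable_compose[OF rvX]) simp
  qed (rule rvX)
  then show ?thesis by simp
qed

lemma measurable_FX: "(\<lambda>\<omega>. F (X k \<omega>) :: real) \<in> borel_measurable M"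
  by (rule measurable_compose[OF rvX]) simp

lemma cond_bound:
  fixes F :: "nat \<times> nat \<Rightarrow> nat \<times> nat \<Rightarrow> real" and Bd :: "nat \<times> nat \<Rightarrow> real"
  assumes F0: "\<And>v w. 0 \<le> F v w"
    and intv: "\<And>v. integrable M (\<lambda>\<omega>. F v (step (Suc k) v (W (Suc k) \<omega>)))"
    and bnd: "\<And>v. expectation (\<lambda>\<omega>. F v (step (Suc k) v (W (Suc k) \<omega>))) \<le> Bd v"
    and intB: "integrable M (\<lambda>\<omega>. Bd (X k \<omega>))"
  shows "integrable M (\<lambda>\<omega>. F (X k \<omega>) (X (Suc k) \<omega>))"
    and "expectation (\<lambda>\<omega>. F (X k \<omega>) (X (Suc k) \<omega>)) \<le> expectation (\<lambda>\<omega>. Bd (X k \<omega>))"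
proof -
  have Bd0: "0 \<le> Bd v" for v
  proof -
    have "0 \<le> expectation (\<lambda>\<omega>. F v (step (Suc k) v (W (Suc k) \<omega>)))" by (intro integral_nonneg_AE) (simp add: F0)
    also have "\<dots> \<le> Bd v" by (rule bnd)
    finally show ?thesis .
  qed
  have "(\<integral>\<^sup>+\<omega>. ennreal (F (X k \<omega>) (X (Suc k) \<omega>)) \<partial>M)
       = (\<integral>\<^sup>+\<omega>. (\<integral>\<^sup>+\<omega>'. ennreal (F (X k \<omega>) (step (Suc k) (X k \<omega>) (W (Suc k) \<omega>'))) \<partial>M) \<partial>M)"
    by (rule cond_nn[where F="\<lambda>v w. ennreal (F v w)"])
  also have "\<dots> = (\<integral>\<^sup>+\<omega>. ennreal (expectation (\<lambda>\<omega>'. F (X k \<omega>) (step (Suc k) (X k \<omega>) (W (Suc k) \<omega>')))) \<partial>M)"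
    by (intro nn_integral_cong nn_integral_eq_integral intv) (simp add: F0)
  also have "\<dots> \<le> (\<integral>\<^sup>+\<omega>. ennreal (Bd (X k \<omega>)) \<partial>M)"
    by (intro nn_integral_mono ennreal_leI bnd)
  also have "\<dots> = ennreal (expectation (\<lambda>\<omega>. Bd (X k \<omega>)))"
    by (intro nn_integral_eq_integral intB) (simp add: Bd0)
  finally have le: "(\<integral>\<^sup>+\<omega>. ennreal (F (X k \<omega>) (X (Suc k) \<omega>)) \<partial>M) \<le> ennreal (expectation (\<lambda>\<omega>. Bd (X k \<omega>)))" .
  show int: "integrable M (\<lambda>\<omega>. F (X k \<omega>) (X (Suc k) \<omega>))"
  proof (rule integrableI_bounded)
    show "(\<lambda>\<omega>. F (X k \<omega>) (X (Suc k) \<omega>)) \<in> borel_measurable M" by (rule measurable_FXX)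
    have "(\<integral>\<^sup>+\<omega>. ennreal (norm (F (X k \<omega>) (X (Suc k) \<omega>))) \<partial>M) = (\<integral>\<^sup>+\<omega>. ennreal (F (X k \<omega>) (X (Suc k) \<omega>)) \<partial>M)"
      by (simp add: F0)
    also have "\<dots> < \<infinity>" using le by (simp add: order_le_less_trans)
    finally show "(\<integral>\<^sup>+\<omega>. ennreal (norm (F (X k \<omega>) (X (Suc k) \<omega>))) \<partial>M) < \<infinity>" .
  qed
  have "ennreal (expectation (\<lambda>\<omega>. F (X k \<omega>) (X (Suc k) \<omega>))) = (\<integral>\<^sup>+\<omega>. ennreal (F (X k \<omega>) (X (Suc k) \<omega>)) \<partial>M)"
    by (rule nn_integral_eq_integral[symmetric, OF int]) (simp add: F0)
  with le have "ennreal (expectation (\<lambda>\<omega>. F (X k \<omega>) (X (Suc k) \<omega>))) \<le> ennreal (expectation (\<lambda>\<omega>. Bd (X k \<omega>)))" by simp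
  moreover have "0 \<le> expectation (\<lambda>\<omega>. Bd (X k \<omega>))" by (intro integral_nonneg_AE) (simp add: Bd0)
  ultimately show "expectation (\<lambda>\<omega>. F (X k \<omega>) (X (Suc k) \<omega>)) \<le> expectation (\<lambda>\<omega>. Bd (X k \<omega>))"
    by (simp add: ennreal_le_iff)
qed

lemma mean_N:
  assumes c: "\<bar>fst c\<bar> \<le> 1" "\<bar>snd c\<bar> \<le> 1"
  shows "expectation (\<lambda>\<omega>. lin c (step (Suc k) v (W (Suc k) \<omega>)) - (\<Sum>t\<in>Jset (Suc k) v. mval c t)) = 0"
proof -
  have Jsub: "Jset (Suc k) v \<subseteq> gw_index_set" by (rule Jset_sub) simp
  have it: "\<And>t. t \<in> Jset (Suc k) v \<Longrightarrow> integrable M (\<lambda>\<omega>. lin c (Y t \<omega>))"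
    using Jsub int_lin[OF _ c] by blast
  have "expectation (\<lambda>\<omega>. lin c (step (Suc k) v (W (Suc k) \<omega>)) - (\<Sum>t\<in>Jset (Suc k) v. mval c t))
      = expectation (\<lambda>\<omega>. \<Sum>t\<in>Jset (Suc k) v. lin c (Y t \<omega>)) - (\<Sum>t\<in>Jset (Suc k) v. mval c t)"
    unfolding lin_step by (subst Bochner_Integration.integral_diff) (auto intro!: Bochner_Integration.integrable_sum it simp: prob_space)
  also have "expectation (\<lambda>\<omega>. \<Sum>t\<in>Jset (Suc k) v. lin c (Y t \<omega>)) = (\<Sum>t\<in>Jset (Suc k) v. mu c t)"
    unfolding mu_def by (rule Bochner_Integration.integral_sum) (rule it)
  also have "\<dots> = (\<Sum>t\<in>Jset (Suc k) v. mval c t)"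
    using Jsub by (intro sum.cong refl mu_eq) auto
  finally show ?thesis by simp
qed

end

lemma sum_if0_le:
  fixes g :: "nat \<Rightarrow> real"
  assumes "\<And>i. 0 \<le> g i"
  shows "(\<Sum>i\<le>p. (if i = 0 then A else g i)) \<le> A + (\<Sum>i\<le>p. g i)"
proof -
  have "(\<Sum>i\<le>p. (if i = 0 then A else g i)) = (\<Sum>i\<le>p. ((if i = 0 then A else 0) + (if i = 0 then 0 else g i)))"
    by (intro sum.cong) auto
  also have "\<dots> = A + (\<Sum>i\<le>p. (if i = 0 then 0 else g i))"
    by (simp add: sum.distrib)
  also have "(\<Sum>i\<le>p. (if i = 0 then 0 else g i)) \<le> (\<Sum>i\<le>p. g i)"
    by (intro sum_mono) (auto simp: assms)
  finally show ?thesis by simp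
qed

lemma choose_sum_real: "(\<Sum>i\<le>p. real (p choose i)) = 2^p"
  using choose_row_sum[of p] by (metis of_nat_numeral of_nat_power of_nat_sum)

lemma pow_split_le:
  fixes z c :: real
  assumes z: "1 \<le> z" and c: "0 \<le> c"
  shows "(z + c)^p \<le> z^p + 2^p * (1 + c)^p * z^(p-1)"
proof -
  have "(z + c)^p = (c + z)^p" by (simp add: add.commute)
  also have "\<dots> = (\<Sum>i\<le>p. real (p choose i) * c^i * z^(p-i))" by (rule binomial_ring)
  also have "\<dots> \<le> (\<Sum>i\<le>p. (if i = 0 then z^p else real (p choose i) * ((1+c)^p * z^(p-1))))"
  proof (rule sum_mono)
    fix i assume i: "i \<in> {..p}"
    show "real (p choose i) * c^i * z^(p-i) \<le> (if i = 0 then z^p else real (p choose i) * ((1+c)^p * z^(p-1)))"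
    proof (cases "i = 0")
      case False
      have "c^i \<le> (1+c)^i" using c by (intro power_mono) auto
      also have "\<dots> \<le> (1+c)^p" using i c by (intro power_increasing) auto
      finally have 1: "c^i \<le> (1+c)^p" .
      have 2: "z^(p-i) \<le> z^(p-1)" using False z by (intro power_increasing) auto
      have "c^i * z^(p-i) \<le> (1+c)^p * z^(p-1)" using 1 2 c z by (intro mult_mono) auto
      then show ?thesis using False by (simp add: mult.assoc mult_left_mono)
    qed simp
  qed
  also have "\<dots> \<le> z^p + (\<Sum>i\<le>p. real (p choose i) * ((1+c)^p * z^(p-1)))"
    by (rule sum_if0_le) (use c z in simp)
  also have "(\<Sum>i\<le>p. real (p choose i) * ((1+c)^p * z^(p-1))) = 2^p * (1 + c)^p * z^(p-1)"
    by (simp add: sum_distrib_right[symmetric] choose_sum_real)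
  finally show ?thesis by simp
qed

lemma mixed_le:
  fixes z c :: real
  assumes z: "1 \<le> z" and c: "0 \<le> c" and i: "2 \<le> i" "i \<le> p"
  shows "\<bar>z + c\<bar>^(p-i) * z^(i div 2) \<le> (1 + c)^p * z^(p-1)"
proof -
  have "\<bar>z + c\<bar> \<le> (1 + c) * z" using z c by (simp add: algebra_simps) (smt (verit) mult_le_cancel_left1)
  then have "\<bar>z + c\<bar>^(p-i) \<le> ((1 + c) * z)^(p-i)" by (intro power_mono) auto
  also have "\<dots> = (1 + c)^(p-i) * z^(p-i)" by (simp add: power_mult_distrib)
  also have "\<dots> \<le> (1 + c)^p * z^(p-i)" using c z by (intro mult_right_mono power_increasing) auto
  finally have a: "\<bar>z + c\<bar>^(p-i) \<le> (1 + c)^p * z^(p-i)" .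
  have "\<bar>z + c\<bar>^(p-i) * z^(i div 2) \<le> (1 + c)^p * z^(p-i) * z^(i div 2)"
    using a z by (intro mult_right_mono) auto
  also have "\<dots> = (1 + c)^p * z^(p - i + i div 2)" by (simp add: power_add mult.assoc)
  also have "\<dots> \<le> (1 + c)^p * z^(p-1)"
    using z c i by (intro mult_left_mono power_increasing) auto
  finally show ?thesis .
qed

lemma numU:
  fixes z c B :: real
  assumes z: "1 \<le> z" and c: "0 \<le> c" and B: "0 \<le> B"
  shows "(\<Sum>i\<le>p. (if i = 0 then (z+c)^p else if i = 1 then 0 else real (p choose i) * \<bar>z+c\<bar>^(p-i) * (B * z^(i div 2))))
          \<le> z^p + 2^p * (1+c)^p * (1 + B) * z^(p-1)"
proof -
  have "(\<Sum>i\<le>p. (if i = 0 then (z+c)^p else if i = 1 then 0 else real (p choose i) * \<bar>z+c\<bar>^(p-i) * (B * z^(i div 2))))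
      \<le> (\<Sum>i\<le>p. (if i = 0 then (z+c)^p else real (p choose i) * ((1+c)^p * B * z^(p-1))))"
  proof (rule sum_mono)
    fix i assume i: "i \<in> {..p}"
    have g0: "0 \<le> real (p choose i) * ((1+c)^p * B * z^(p-1))" using c B z by simp
    show "(if i = 0 then (z+c)^p else if i = 1 then 0 else real (p choose i) * \<bar>z+c\<bar>^(p-i) * (B * z^(i div 2)))
        \<le> (if i = 0 then (z+c)^p else real (p choose i) * ((1+c)^p * B * z^(p-1)))"
    proof (cases "i \<le> 1")
      case True then show ?thesis using g0 by (cases "i = 0") auto
    next
      case False
      then have "\<bar>z + c\<bar>^(p-i) * z^(i div 2) \<le> (1 + c)^p * z^(p-1)" using i by (intro mixed_le z c) auto
      then have "B * (\<bar>z + c\<bar>^(p-i) * z^(i div 2)) \<le> B * ((1 + c)^p * z^(p-1))" using B by (rule mult_left_mono)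
      then have "real (p choose i) * (B * (\<bar>z + c\<bar>^(p-i) * z^(i div 2))) \<le> real (p choose i) * (B * ((1 + c)^p * z^(p-1)))"
        by (rule mult_left_mono) simp
      then have "real (p choose i) * \<bar>z+c\<bar>^(p-i) * (B * z^(i div 2)) \<le> real (p choose i) * ((1+c)^p * B * z^(p-1))"
        by (simp add: algebra_simps)
      then show ?thesis using False by simp
    qed
  qed
  also have "\<dots> \<le> (z+c)^p + (\<Sum>i\<le>p. real (p choose i) * ((1+c)^p * B * z^(p-1)))"
    by (rule sum_if0_le) (use c z B in simp)
  also have "(\<Sum>i\<le>p. real (p choose i) * ((1+c)^p * B * z^(p-1))) = 2^p * ((1+c)^p * B * z^(p-1))"
    by (simp add: sum_distrib_right[symmetric] choose_sum_real)
  also have "(z+c)^p \<le> z^p + 2^p * (1 + c)^p * z^(p-1)" by (rule pow_split_le[OF z c])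
  finally show ?thesis by (simp add: algebra_simps)
qed

context prob_space begin

lemma binom_bound:
  fixes N :: "'a \<Rightarrow> real" and y B z :: real
  assumes intN: "\<And>i. i \<le> p \<Longrightarrow> integrable M (\<lambda>\<omega>. N \<omega> ^ i)"
    and m0: "expectation N = 0"
    and bi: "\<And>i. 2 \<le> i \<Longrightarrow> i \<le> p \<Longrightarrow> \<bar>expectation (\<lambda>\<omega>. N \<omega> ^ i)\<bar> \<le> B * z^(i div 2)"
  shows "integrable M (\<lambda>\<omega>. (y + N \<omega>)^p)"
    and "expectation (\<lambda>\<omega>. (y + N \<omega>)^p)
          \<le> (\<Sum>i\<le>p. (if i = 0 then y^p else if i = 1 then 0 else real (p choose i) * \<bar>y\<bar>^(p-i) * (B * z^(i div 2))))"
proof -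
  have eq: "(\<lambda>\<omega>. (y + N \<omega>)^p) = (\<lambda>\<omega>. \<Sum>i\<le>p. real (p choose i) * y^(p-i) * N \<omega> ^ i)"
  proof
    fix \<omega>
    have "(y + N \<omega>)^p = (N \<omega> + y)^p" by (simp add: add.commute)
    also have "\<dots> = (\<Sum>i\<le>p. real (p choose i) * N \<omega> ^ i * y^(p-i))" by (rule binomial_ring)
    finally show "(y + N \<omega>)^p = (\<Sum>i\<le>p. real (p choose i) * y^(p-i) * N \<omega> ^ i)" by (simp add: algebra_simps)
  qed
  have it: "\<And>i. i \<in> {..p} \<Longrightarrow> integrable M (\<lambda>\<omega>. real (p choose i) * y^(p-i) * N \<omega> ^ i)"
    using intN by auto
  show "integrable M (\<lambda>\<omega>. (y + N \<omega>)^p)" unfolding eq by (intro Bochner_Integration.integrable_sum it)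
  have "expectation (\<lambda>\<omega>. (y + N \<omega>)^p) = (\<Sum>i\<le>p. expectation (\<lambda>\<omega>. real (p choose i) * y^(p-i) * N \<omega> ^ i))"
    unfolding eq by (rule Bochner_Integration.integral_sum) (rule it)
  also have "\<dots> = (\<Sum>i\<le>p. real (p choose i) * y^(p-i) * expectation (\<lambda>\<omega>. N \<omega> ^ i))"
    by simp
  also have "\<dots> \<le> (\<Sum>i\<le>p. (if i = 0 then y^p else if i = 1 then 0 else real (p choose i) * \<bar>y\<bar>^(p-i) * (B * z^(i div 2))))"
  proof (rule sum_mono)
    fix i assume i: "i \<in> {..p}"
    show "real (p choose i) * y^(p-i) * expectation (\<lambda>\<omega>. N \<omega> ^ i)
        \<le> (if i = 0 then y^p else if i = 1 then 0 else real (p choose i) * \<bar>y\<bar>^(p-i) * (B * z^(i div 2)))"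
    proof (cases "i \<le> 1")
      case True
      then consider "i = 0" | "i = 1" by linarith
      then show ?thesis
      proof cases
        case 1 then show ?thesis by (simp add: prob_space)
      next
        case 2
        have "expectation (\<lambda>\<omega>. N \<omega> ^ i) = 0" using m0 2 by simp
        then show ?thesis using 2 by simp
      qed
    next
      case False
      have "real (p choose i) * y^(p-i) * expectation (\<lambda>\<omega>. N \<omega> ^ i)
           \<le> \<bar>real (p choose i) * y^(p-i) * expectation (\<lambda>\<omega>. N \<omega> ^ i)\<bar>" by simp
      also have "\<dots> = real (p choose i) * \<bar>y\<bar>^(p-i) * \<bar>expectation (\<lambda>\<omega>. N \<omega> ^ i)\<bar>"
        by (simp add: abs_mult power_abs)
      also have "\<dots> \<le> real (p choose i) * \<bar>y\<bar>^(p-i) * (B * z^(i div 2))"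
        using bi[of i] False i by (intro mult_left_mono) auto
      finally show ?thesis using False by simp
    qed
  qed
  finally show "expectation (\<lambda>\<omega>. (y + N \<omega>)^p)
          \<le> (\<Sum>i\<le>p. (if i = 0 then y^p else if i = 1 then 0 else real (p choose i) * \<bar>y\<bar>^(p-i) * (B * z^(i div 2))))" .
qed

end

lemma pow_step_le:
  fixes x :: real assumes x: "0 \<le> x" and p: "1 \<le> p"
  shows "x^p + x^(p-1) \<le> (x + 1)^p"
proof -
  obtain q where q: "p = Suc q" using p by (cases p) auto
  have "x^q \<le> (x+1)^q" using x by (intro power_mono) auto
  then have "x * x^q + x^q \<le> x * (x+1)^q + (x+1)^q" using x by (intro add_mono mult_left_mono) auto
  then show ?thesis using q by (simp add: algebra_simps)
qed

context gwp2
begin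

definition "UU k \<omega> = real (fst (X k \<omega>)) + real (snd (X k \<omega>))"
definition "me = me1 + me2"
definition "Bc = (1 + l * Kc) * real l ^ l"
definition "DU p = 2^p * (1 + me)^p * (1 + Bc)"

lemma me_nonneg: "0 \<le> me"
proof -
  have "0 \<le> me1" unfolding me1_def by (intro integral_nonneg_AE) auto
  moreover have "0 \<le> me2" unfolding me2_def by (intro integral_nonneg_AE) auto
  ultimately show ?thesis by (simp add: me_def)
qed

lemma Bc_nonneg: "0 \<le> Bc" unfolding Bc_def using Kc_ge1 by simp

lemma DU_nonneg: "0 \<le> DU p" unfolding DU_def using me_nonneg Bc_nonneg by simp

lemma lin11: "lin (1,1) p = real (fst p) + real (snd p)" by (simp add: lin_def)

lemma prod_const_pow: "(\<Prod>r<i. (x::real)) = x ^ i" by simp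

lemma U_step_v:
  fixes v :: "nat \<times> nat"
  assumes p: "p \<le> l"
  defines "z \<equiv> real (fst v) + real (snd v) + 1"
  shows "integrable M (\<lambda>\<omega>. (1 + lin (1,1) (step (Suc k) v (W (Suc k) \<omega>)))^p)"
    and "expectation (\<lambda>\<omega>. (1 + lin (1,1) (step (Suc k) v (W (Suc k) \<omega>)))^p) \<le> z^p + DU p * z^(p-1)"
proof -
  define N where "N \<omega> = lin (1,1) (step (Suc k) v (W (Suc k) \<omega>)) - (\<Sum>t\<in>Jset (Suc k) v. mval (1,1) t)" for \<omega>
  have sm: "(\<Sum>t\<in>Jset (Suc k) v. mval (1,1) t) = real (fst v) + real (snd v) + me"
    unfolding sum_mval using alphabeta by (simp add: me_def algebra_simps)
  have eqf: "(\<lambda>\<omega>. (1 + lin (1,1) (step (Suc k) v (W (Suc k) \<omega>)))^p) = (\<lambda>\<omega>. ((z + me) + N \<omega>)^p)"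
    by (rule ext) (simp add: N_def sm z_def)
  have cr: "\<And>r. r < i \<Longrightarrow> \<bar>fst ((\<lambda>_. (1::real,1::real)) r)\<bar> \<le> 1 \<and> \<bar>snd ((\<lambda>_. (1::real,1::real)) r)\<bar> \<le> 1" for i by simp
  have intN: "integrable M (\<lambda>\<omega>. N \<omega> ^ i)" if "i \<le> p" for i
    using per_v(1)[where cr="\<lambda>_. (1,1)" and m=i and k=k and v=v] that p by (simp add: N_def)
  have m0: "expectation N = 0"
    using mean_N[of "(1,1)" k v] by (simp add: N_def[abs_def])
  have bi: "\<bar>expectation (\<lambda>\<omega>. N \<omega> ^ i)\<bar> \<le> Bc * z^(i div 2)" if "2 \<le> i" "i \<le> p" for i
    using per_v(2)[where cr="\<lambda>_. (1,1)" and m=i and k=k and v=v] that p by (simp add: N_def Bc_def z_def mult.assoc add.commute add.left_commute)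
  note BB = binom_bound[OF intN m0 bi, where y="z + me"]
  show "integrable M (\<lambda>\<omega>. (1 + lin (1,1) (step (Suc k) v (W (Suc k) \<omega>)))^p)"
    unfolding eqf by (rule BB(1))
  have z1: "1 \<le> z" unfolding z_def by simp
  have "expectation (\<lambda>\<omega>. (1 + lin (1,1) (step (Suc k) v (W (Suc k) \<omega>)))^p)
     \<le> (\<Sum>i\<le>p. (if i = 0 then (z + me)^p else if i = 1 then 0 else real (p choose i) * \<bar>z + me\<bar>^(p-i) * (Bc * z^(i div 2))))"
    unfolding eqf by (rule BB(2))
  also have "\<dots> \<le> z^p + 2^p * (1+me)^p * (1 + Bc) * z^(p-1)"
    by (rule numU[OF z1 me_nonneg Bc_nonneg])
  finally show "expectation (\<lambda>\<omega>. (1 + lin (1,1) (step (Suc k) v (W (Suc k) \<omega>)))^p) \<le> z^p + DU p * z^(p-1)"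
    by (simp add: DU_def)
qed

lemma U_Suc: "1 + lin (1,1) (X (Suc k) \<omega>) = 1 + UU (Suc k) \<omega>"
  by (simp add: lin11 UU_def)

lemma U_int: "p \<le> l \<Longrightarrow> integrable M (\<lambda>\<omega>. (1 + UU k \<omega>)^p)"
proof (induction k arbitrary: p)
  case 0 then show ?case by (simp add: UU_def)
next
  case (Suc k)
  let ?F = "\<lambda>v w. (1 + lin (1,1) w)^p"
  let ?Bd = "\<lambda>v. (1 + DU p) * (real (fst v) + real (snd v) + 1)^p"
  have bnd: "expectation (\<lambda>\<omega>. ?F v (step (Suc k) v (W (Suc k) \<omega>))) \<le> ?Bd v" for v
  proof -
    let ?z = "real (fst v) + real (snd v) + 1"
    have z1: "1 \<le> ?z" by simp
    have "expectation (\<lambda>\<omega>. ?F v (step (Suc k) v (W (Suc k) \<omega>))) \<le> ?z^p + DU p * ?z^(p-1)"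
      by (rule U_step_v(2)[OF Suc.prems])
    also have "?z^(p-1) \<le> ?z^p" using z1 by (intro power_increasing) auto
    then have "?z^p + DU p * ?z^(p-1) \<le> ?z^p + DU p * ?z^p" using DU_nonneg by (intro add_left_mono mult_left_mono) auto
    finally show ?thesis by (simp add: algebra_simps)
  qed
  have intB: "integrable M (\<lambda>\<omega>. ?Bd (X k \<omega>))"
    using Suc.IH[OF Suc.prems] by (simp add: UU_def add.commute)
  have "integrable M (\<lambda>\<omega>. ?F (X k \<omega>) (X (Suc k) \<omega>))"
    by (rule cond_bound(1)[OF _ U_step_v(1)[OF Suc.prems] bnd intB]) (simp add: lin_def)
  then show ?case by (simp only: U_Suc)
qed

lemma U_rec:
  assumes p: "1 \<le> p" "p \<le> l"
  shows "expectation (\<lambda>\<omega>. (1 + UU (Suc k) \<omega>)^p)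
      \<le> expectation (\<lambda>\<omega>. (1 + UU k \<omega>)^p) + DU p * expectation (\<lambda>\<omega>. (1 + UU k \<omega>)^(p-1))"
proof -
  let ?F = "\<lambda>v w. (1 + lin (1,1) w)^p"
  let ?Bd = "\<lambda>v. (real (fst v) + real (snd v) + 1)^p + DU p * (real (fst v) + real (snd v) + 1)^(p-1)"
  have eqB: "(\<lambda>\<omega>. ?Bd (X k \<omega>)) = (\<lambda>\<omega>. (1 + UU k \<omega>)^p + DU p * (1 + UU k \<omega>)^(p-1))"
    by (rule ext) (simp add: UU_def add.commute)
  have i1: "integrable M (\<lambda>\<omega>. (1 + UU k \<omega>)^p)" by (rule U_int) (use p in auto)
  have i2: "integrable M (\<lambda>\<omega>. (1 + UU k \<omega>)^(p-1))" by (rule U_int) (use p in auto)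
  have intB: "integrable M (\<lambda>\<omega>. ?Bd (X k \<omega>))" unfolding eqB using i1 i2 by simp
  have "expectation (\<lambda>\<omega>. ?F (X k \<omega>) (X (Suc k) \<omega>)) \<le> expectation (\<lambda>\<omega>. ?Bd (X k \<omega>))"
    by (rule cond_bound(2)[OF _ U_step_v(1)[OF p(2)] U_step_v(2)[OF p(2)] intB]) (simp add: lin_def)
  also have "\<dots> = expectation (\<lambda>\<omega>. (1 + UU k \<omega>)^p) + DU p * expectation (\<lambda>\<omega>. (1 + UU k \<omega>)^(p-1))"
    unfolding eqB using i1 i2 by simp
  finally show ?thesis by (simp only: U_Suc)
qed

lemma U_bound: "p \<le> l \<Longrightarrow> \<exists>C. \<forall>k. expectation (\<lambda>\<omega>. (1 + UU k \<omega>)^p) \<le> C * (real k + 1)^p"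
proof (induction p rule: less_induct)
  case (less p)
  show ?case
  proof (cases "p = 0")
    case True then show ?thesis by (intro exI[of _ 1]) (simp add: prob_space)
  next
    case False
    then have p1: "1 \<le> p" by simp
    have "\<exists>C. \<forall>k. expectation (\<lambda>\<omega>. (1 + UU k \<omega>)^(p-1)) \<le> C * (real k + 1)^(p-1)"
      using less.IH[of "p-1"] less.prems p1 by auto
    then obtain C' where C': "\<And>k. expectation (\<lambda>\<omega>. (1 + UU k \<omega>)^(p-1)) \<le> C' * (real k + 1)^(p-1)"
      by blast
    define C where "C = max 1 (DU p * C')"
    have "expectation (\<lambda>\<omega>. (1 + UU k \<omega>)^p) \<le> C * (real k + 1)^p" for k
    proof (induction k)
      case 0 then show ?case by (simp add: UU_def prob_space C_def)
    next
      case (Suc k)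
      have "expectation (\<lambda>\<omega>. (1 + UU (Suc k) \<omega>)^p)
          \<le> expectation (\<lambda>\<omega>. (1 + UU k \<omega>)^p) + DU p * expectation (\<lambda>\<omega>. (1 + UU k \<omega>)^(p-1))"
        by (rule U_rec[OF p1 less.prems])
      also have "\<dots> \<le> C * (real k + 1)^p + DU p * (C' * (real k + 1)^(p-1))"
        using Suc.IH C'[of k] DU_nonneg by (intro add_mono mult_left_mono) auto
      also have "DU p * (C' * (real k + 1)^(p-1)) \<le> C * (real k + 1)^(p-1)"
      proof -
        have "DU p * (C' * (real k + 1)^(p-1)) = (DU p * C') * (real k + 1)^(p-1)" by simp
        also have "\<dots> \<le> C * (real k + 1)^(p-1)" unfolding C_def by (intro mult_right_mono) auto
        finally show ?thesis .
      qed
      also have "C * (real k + 1)^p + C * (real k + 1)^(p-1) = C * ((real k + 1)^p + (real k + 1)^(p-1))"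
        by (simp add: algebra_simps)
      also have "\<dots> \<le> C * ((real k + 1) + 1)^p"
        using pow_step_le[of "real k + 1" p] p1 unfolding C_def by (intro mult_left_mono) auto
      finally show ?case by simp
    qed
    then show ?thesis by blast
  qed
qed

end

lemma young_like:
  fixes Y z R :: real
  assumes Y: "0 \<le> Y" and z: "1 \<le> z" and R: "1 \<le> R" and h: "1 \<le> h" "h \<le> j"
  shows "Y^(j-h) * z^h \<le> R^j * z^j + Y^j / R"
proof (cases "Y \<le> R * z")
  case True
  have "Y^(j-h) \<le> (R * z)^(j-h)" using Y True by (intro power_mono) auto
  then have "Y^(j-h) * z^h \<le> (R * z)^(j-h) * z^h" using z by (intro mult_right_mono) auto
  also have "\<dots> = R^(j-h) * z^(j - h + h)" by (simp add: power_mult_distrib power_add)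
  also have "\<dots> = R^(j-h) * z^j" using h by simp
  also have "\<dots> \<le> R^j * z^j" using R z by (intro mult_right_mono power_increasing) auto
  also have "\<dots> \<le> R^j * z^j + Y^j / R" using Y R by simp
  finally show ?thesis .
next
  case False
  then have zY: "z \<le> Y / R" using R by (simp add: field_simps)
  have "z^h \<le> (Y / R)^h" using zY z by (intro power_mono) auto
  also have "\<dots> = Y^h / R^h" by (simp add: power_divide)
  also have "\<dots> \<le> Y^h / R"
  proof -
    have "R \<le> R^h" using R h by (metis power_increasing power_one_right)
    then show ?thesis using Y R by (intro divide_left_mono) auto
  qed
  finally have zh: "z^h \<le> Y^h / R" .
  have "Y^(j-h) * z^h \<le> Y^(j-h) * (Y^h / R)" using zh Y by (intro mult_left_mono) auto
  also have "\<dots> = Y^(j - h + h) / R" by (simp add: power_add)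
  also have "\<dots> = Y^j / R" using h by simp
  also have "\<dots> \<le> R^j * z^j + Y^j / R" using R z by simp
  finally show ?thesis .
qed

lemma term_V:
  fixes y z R :: real
  assumes z: "1 \<le> z" and R: "1 \<le> R" and i: "2 \<le> i" "i \<le> 2*j"
  shows "\<bar>y\<bar>^(2*j-i) * z^(i div 2) \<le> (1 + R^j) * z^j + y^(2*j) / R"
proof -
  define h where "h = i div 2"
  have h1: "1 \<le> h" "h \<le> j" "2*h \<le> i" using i unfolding h_def by auto
  have "\<bar>y\<bar>^(2*j-i) \<le> 1 + \<bar>y\<bar>^(2*(j-h))" using h1 by (intro abs_pow_le_1_plus[of _ _ y, simplified]) auto
  also have "\<bar>y\<bar>^(2*(j-h)) = (y^2)^(j-h)" by (simp add: power_mult power_even_abs[symmetric] power2_eq_square)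
  finally have a: "\<bar>y\<bar>^(2*j-i) \<le> 1 + (y^2)^(j-h)" .
  have "\<bar>y\<bar>^(2*j-i) * z^h \<le> (1 + (y^2)^(j-h)) * z^h" using a z by (intro mult_right_mono) auto
  also have "\<dots> = z^h + (y^2)^(j-h) * z^h" by (simp add: algebra_simps)
  finally have c: "\<bar>y\<bar>^(2*j-i) * z^h \<le> z^h + (y^2)^(j-h) * z^h" .
  have b1: "z^h \<le> z^j" using z h1 by (intro power_increasing) auto
  have b2: "(y^2)^(j-h) * z^h \<le> R^j * z^j + (y^2)^j / R" by (rule young_like) (use z R h1 in auto)
  have b3: "(y^2)^j = y^(2*j)" by (simp add: power_mult)
  show ?thesis unfolding h_def[symmetric] using c b1 b2 b3 by (simp add: algebra_simps)
qed

lemma sum_V: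
  fixes y z R B :: real
  assumes z: "1 \<le> z" and R: "1 \<le> R" and B: "0 \<le> B"
  shows "(\<Sum>i\<le>2*j. (if i = 0 then y^(2*j) else if i = 1 then 0 else real ((2*j) choose i) * \<bar>y\<bar>^(2*j-i) * (B * z^(i div 2))))
     \<le> (1 + 4^j * B / R) * y^(2*j) + 4^j * B * (1 + R^j) * z^j"
proof -
  let ?g = "\<lambda>i. real ((2*j) choose i) * (B * ((1 + R^j) * z^j + y^(2*j) / R))"
  have ye: "0 \<le> y^(2*j)" by (simp add: power_mult)
  have g0: "0 \<le> ?g i" for i using B R z ye by (intro mult_nonneg_nonneg add_nonneg_nonneg) auto
  have "(\<Sum>i\<le>2*j. (if i = 0 then y^(2*j) else if i = 1 then 0 else real ((2*j) choose i) * \<bar>y\<bar>^(2*j-i) * (B * z^(i div 2))))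
     \<le> (\<Sum>i\<le>2*j. (if i = 0 then y^(2*j) else ?g i))"
  proof (rule sum_mono)
    fix i assume i: "i \<in> {..2*j}"
    show "(if i = 0 then y^(2*j) else if i = 1 then 0 else real ((2*j) choose i) * \<bar>y\<bar>^(2*j-i) * (B * z^(i div 2)))
        \<le> (if i = 0 then y^(2*j) else ?g i)"
    proof (cases "i \<le> 1")
      case True then show ?thesis using g0[of i] by (cases "i = 0") auto
    next
      case False
      have "\<bar>y\<bar>^(2*j-i) * z^(i div 2) \<le> (1 + R^j) * z^j + y^(2*j) / R"
        by (rule term_V) (use z R False i in auto)
      then have "real ((2*j) choose i) * (B * (\<bar>y\<bar>^(2*j-i) * z^(i div 2))) \<le> ?g i"
        using B by (intro mult_left_mono) auto
      then show ?thesis using False by (simp add: algebra_simps)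
    qed
  qed
  also have "\<dots> \<le> y^(2*j) + (\<Sum>i\<le>2*j. ?g i)" by (rule sum_if0_le[OF g0])
  also have "(\<Sum>i\<le>2*j. ?g i) = 2^(2*j) * (B * ((1 + R^j) * z^j + y^(2*j) / R))"
    by (simp add: sum_distrib_right[symmetric] choose_sum_real)
  also have "(2::real)^(2*j) = 4^j" by (simp add: power_mult)
  finally show ?thesis by (simp add: algebra_simps)
qed

lemma yV_bound:
  fixes \<rho> \<delta> x :: real
  assumes r: "\<bar>\<rho>\<bar> < 1"
  defines "\<rho>' \<equiv> (1 + \<bar>\<rho>\<bar>) / 2"
  defines "C0 \<equiv> \<bar>\<rho>\<bar> * (2 * \<bar>\<delta>\<bar> / (1 - \<bar>\<rho>\<bar>)) + \<bar>\<delta>\<bar>"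
  shows "(\<rho> * x + \<delta>)^(2*j) \<le> \<rho>'^(2*j) * x^(2*j) + C0^(2*j)"
proof -
  let ?T = "2 * \<bar>\<delta>\<bar> / (1 - \<bar>\<rho>\<bar>)"
  have e: "(\<rho> * x + \<delta>)^(2*j) = \<bar>\<rho> * x + \<delta>\<bar>^(2*j)" by (simp add: power_even_abs)
  have ex: "x^(2*j) = \<bar>x\<bar>^(2*j)" by (simp add: power_even_abs)
  have tri: "\<bar>\<rho> * x + \<delta>\<bar> \<le> \<bar>\<rho>\<bar> * \<bar>x\<bar> + \<bar>\<delta>\<bar>" by (metis abs_mult abs_triangle_ineq)
  show ?thesis
  proof (cases "?T \<le> \<bar>x\<bar>")
    case True
    have "\<bar>\<delta>\<bar> \<le> (1 - \<bar>\<rho>\<bar>) / 2 * \<bar>x\<bar>"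
    proof -
      have "2 * \<bar>\<delta>\<bar> \<le> \<bar>x\<bar> * (1 - \<bar>\<rho>\<bar>)" using True r by (simp add: field_simps)
      then show ?thesis by (simp add: field_simps)
    qed
    then have "\<bar>\<rho> * x + \<delta>\<bar> \<le> \<rho>' * \<bar>x\<bar>" using tri unfolding \<rho>'_def by (simp add: field_simps)
    then have "\<bar>\<rho> * x + \<delta>\<bar>^(2*j) \<le> (\<rho>' * \<bar>x\<bar>)^(2*j)" by (intro power_mono) auto
    also have "\<dots> = \<rho>'^(2*j) * x^(2*j)" by (simp add: power_mult_distrib ex)
    finally show ?thesis unfolding e by (simp add: add_increasing2 power_mult)
  next
    case False
    have "\<bar>\<rho>\<bar> * \<bar>x\<bar> \<le> \<bar>\<rho>\<bar> * ?T" using False by (intro mult_left_mono) auto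
    then have "\<bar>\<rho> * x + \<delta>\<bar> \<le> C0" using tri unfolding C0_def by linarith
    then have "\<bar>\<rho> * x + \<delta>\<bar>^(2*j) \<le> C0^(2*j)" by (intro power_mono) auto
    moreover have "0 \<le> \<rho>'^(2*j) * x^(2*j)" unfolding \<rho>'_def by (simp add: power_mult)
    ultimately show ?thesis unfolding e by linarith
  qed
qed

context gwp2
begin

definition "VV k \<omega> = real (fst (X k \<omega>)) - real (snd (X k \<omega>))"
definition "rho = \<alpha> - \<beta>"
definition "delta = me1 - me2"
definition "rho' = (1 + \<bar>rho\<bar>) / 2"
definition "C0 = \<bar>rho\<bar> * (2 * \<bar>delta\<bar> / (1 - \<bar>rho\<bar>)) + \<bar>delta\<bar>"
definition "thV j = rho' ^ (2*j)"
definition "AV j = 4^j * Bc"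
definition "RV j = 1 + 2 * AV j / (1 - thV j)"
definition "qV j = (1 + thV j) / 2"
definition "DV j = (1 + AV j / RV j) * C0^(2*j) + AV j * (1 + RV j ^ j)"

lemma rho_lt1: "\<bar>rho\<bar> < 1" unfolding rho_def using alpha beta by auto

lemma rho'_bounds: "0 \<le> rho'" "rho' < 1"
  unfolding rho'_def using rho_lt1 by auto

lemma thV_bounds: "1 \<le> j \<Longrightarrow> 0 \<le> thV j \<and> thV j < 1"
  unfolding thV_def using rho'_bounds by (auto simp: power_less_one_iff)

lemma AV_nonneg: "0 \<le> AV j" unfolding AV_def using Bc_nonneg by simp

lemma RV_ge1: "1 \<le> j \<Longrightarrow> 1 \<le> RV j"
  unfolding RV_def using thV_bounds[of j] AV_nonneg[of j] by simp

lemma qV_bounds: "1 \<le> j \<Longrightarrow> 0 \<le> qV j \<and> qV j < 1"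
  unfolding qV_def using thV_bounds[of j] by auto

lemma DV_nonneg: "1 \<le> j \<Longrightarrow> 0 \<le> DV j"
  unfolding DV_def using AV_nonneg[of j] RV_ge1[of j]
  by (intro add_nonneg_nonneg mult_nonneg_nonneg) (auto simp: power_mult)

lemma key_q: "1 \<le> j \<Longrightarrow> (1 + AV j / RV j) * thV j \<le> qV j"
proof -
  assume j: "1 \<le> j"
  have th: "0 \<le> thV j" "thV j < 1" using thV_bounds[OF j] by auto
  have A: "0 \<le> AV j" by (rule AV_nonneg)
  have R: "1 \<le> RV j" by (rule RV_ge1[OF j])
  have "AV j * thV j \<le> AV j" using A th by (intro mult_left_le) auto
  moreover have "RV j * (1 - thV j) = (1 - thV j) + 2 * AV j" unfolding RV_def using th by (simp add: field_simps)
  ultimately have "2 * (AV j * thV j) \<le> RV j * (1 - thV j)" using th by linarith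
  then have "AV j * thV j / RV j \<le> (1 - thV j) / 2" using R by (simp add: field_simps)
  then show ?thesis unfolding qV_def by (simp add: field_simps)
qed

lemma V_step_v:
  fixes v :: "nat \<times> nat"
  assumes j: "1 \<le> j" "2*j \<le> l"
  defines "z \<equiv> real (fst v) + real (snd v) + 1"
  defines "x \<equiv> real (fst v) - real (snd v)"
  shows "integrable M (\<lambda>\<omega>. (lin (1,-1) (step (Suc k) v (W (Suc k) \<omega>)))^(2*j))"
    and "expectation (\<lambda>\<omega>. (lin (1,-1) (step (Suc k) v (W (Suc k) \<omega>)))^(2*j)) \<le> qV j * x^(2*j) + DV j * z^j"
proof -
  define N where "N \<omega> = lin (1,-1) (step (Suc k) v (W (Suc k) \<omega>)) - (\<Sum>t\<in>Jset (Suc k) v. mval (1,-1) t)" for \<omega>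
  define y where "y = rho * x + delta"
  have sm: "(\<Sum>t\<in>Jset (Suc k) v. mval (1,-1) t) = y"
    unfolding sum_mval y_def rho_def delta_def x_def by (simp add: algebra_simps)
  have eqf: "(\<lambda>\<omega>. (lin (1,-1) (step (Suc k) v (W (Suc k) \<omega>)))^(2*j)) = (\<lambda>\<omega>. (y + N \<omega>)^(2*j))"
    by (rule ext) (simp add: N_def sm)
  have intN: "integrable M (\<lambda>\<omega>. N \<omega> ^ i)" if "i \<le> 2*j" for i
    using per_v(1)[where cr="\<lambda>_. (1,-1)" and m=i and k=k and v=v] that j by (simp add: N_def)
  have m0: "expectation N = 0"
    using mean_N[of "(1,-1)" k v] by (simp add: N_def[abs_def])
  have bi: "\<bar>expectation (\<lambda>\<omega>. N \<omega> ^ i)\<bar> \<le> Bc * z^(i div 2)" if "2 \<le> i" "i \<le> 2*j" for i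
    using per_v(2)[where cr="\<lambda>_. (1,-1)" and m=i and k=k and v=v] that j
    by (simp add: N_def Bc_def z_def mult.assoc add.commute add.left_commute)
  note BB = binom_bound[OF intN m0 bi, where y=y]
  show "integrable M (\<lambda>\<omega>. (lin (1,-1) (step (Suc k) v (W (Suc k) \<omega>)))^(2*j))"
    unfolding eqf by (rule BB(1))
  have z1: "1 \<le> z" unfolding z_def by simp
  have R: "1 \<le> RV j" by (rule RV_ge1[OF j(1)])
  have "expectation (\<lambda>\<omega>. (lin (1,-1) (step (Suc k) v (W (Suc k) \<omega>)))^(2*j))
     \<le> (\<Sum>i\<le>2*j. (if i = 0 then y^(2*j) else if i = 1 then 0 else real ((2*j) choose i) * \<bar>y\<bar>^(2*j-i) * (Bc * z^(i div 2))))"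
    unfolding eqf by (rule BB(2))
  also have "\<dots> \<le> (1 + 4^j * Bc / RV j) * y^(2*j) + 4^j * Bc * (1 + RV j ^ j) * z^j"
    by (rule sum_V[OF z1 R Bc_nonneg])
  also have "\<dots> = (1 + AV j / RV j) * y^(2*j) + AV j * (1 + RV j ^ j) * z^j" by (simp add: AV_def)
  also have "y^(2*j) \<le> thV j * x^(2*j) + C0^(2*j)"
    unfolding y_def thV_def C0_def rho'_def by (rule yV_bound[OF rho_lt1])
  then have "(1 + AV j / RV j) * y^(2*j) \<le> (1 + AV j / RV j) * (thV j * x^(2*j) + C0^(2*j))"
    using AV_nonneg[of j] R by (intro mult_left_mono) auto
  also have "(1 + AV j / RV j) * (thV j * x^(2*j) + C0^(2*j))
      = ((1 + AV j / RV j) * thV j) * x^(2*j) + (1 + AV j / RV j) * C0^(2*j)" by (simp add: algebra_simps)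
  also have "((1 + AV j / RV j) * thV j) * x^(2*j) \<le> qV j * x^(2*j)"
    using key_q[OF j(1)] by (intro mult_right_mono) (auto simp: power_mult)
  also have "(1 + AV j / RV j) * C0^(2*j) \<le> (1 + AV j / RV j) * C0^(2*j) * z^j"
  proof -
    have "1 \<le> z^j" using z1 by simp
    moreover have "0 \<le> (1 + AV j / RV j) * C0^(2*j)" using AV_nonneg[of j] R by (simp add: power_mult)
    ultimately show ?thesis by (simp add: mult_le_cancel_left1)
  qed
  finally show "expectation (\<lambda>\<omega>. (lin (1,-1) (step (Suc k) v (W (Suc k) \<omega>)))^(2*j)) \<le> qV j * x^(2*j) + DV j * z^j"
    by (simp add: DV_def algebra_simps)
qed

lemma lin1m: "lin (1,-1) p = real (fst p) - real (snd p)" by (simp add: lin_def)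

lemma V_abs_le: "\<bar>VV k \<omega>\<bar> \<le> 1 + UU k \<omega>"
  by (simp add: VV_def UU_def)

lemma V_int: "2*j \<le> l \<Longrightarrow> integrable M (\<lambda>\<omega>. (VV k \<omega>)^(2*j))"
proof -
  assume jl: "2*j \<le> l"
  have iU: "integrable M (\<lambda>\<omega>. (1 + UU k \<omega>)^(2*j))" by (rule U_int[OF jl])
  have m: "(\<lambda>\<omega>. (VV k \<omega>)^(2*j)) \<in> borel_measurable M"
    unfolding VV_def by (rule measurable_FX[where F="\<lambda>v. (real (fst v) - real (snd v))^(2*j)"])
  show ?thesis
  proof (rule Bochner_Integration.integrable_bound[OF iU m], intro AE_I2)
    fix \<omega>
    have "\<bar>VV k \<omega>\<bar>^(2*j) \<le> (1 + UU k \<omega>)^(2*j)" using V_abs_le by (intro power_mono) auto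
    then show "norm ((VV k \<omega>)^(2*j)) \<le> norm ((1 + UU k \<omega>)^(2*j))"
      by (simp add: power_abs UU_def)
  qed
qed

lemma V_rec:
  assumes j: "1 \<le> j" "2*j \<le> l"
  shows "expectation (\<lambda>\<omega>. (VV (Suc k) \<omega>)^(2*j))
      \<le> qV j * expectation (\<lambda>\<omega>. (VV k \<omega>)^(2*j)) + DV j * expectation (\<lambda>\<omega>. (1 + UU k \<omega>)^j)"
proof -
  let ?F = "\<lambda>v w. (lin (1,-1) w)^(2*j)"
  let ?Bd = "\<lambda>v. qV j * (real (fst v) - real (snd v))^(2*j) + DV j * (real (fst v) + real (snd v) + 1)^j"
  have eqB: "(\<lambda>\<omega>. ?Bd (X k \<omega>)) = (\<lambda>\<omega>. qV j * (VV k \<omega>)^(2*j) + DV j * (1 + UU k \<omega>)^j)"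
    by (rule ext) (simp add: UU_def VV_def add.commute)
  have i1: "integrable M (\<lambda>\<omega>. (VV k \<omega>)^(2*j))" by (rule V_int[OF j(2)])
  have i2: "integrable M (\<lambda>\<omega>. (1 + UU k \<omega>)^j)" by (rule U_int) (use j in auto)
  have intB: "integrable M (\<lambda>\<omega>. ?Bd (X k \<omega>))" unfolding eqB using i1 i2 by simp
  have F0: "\<And>v w. 0 \<le> ?F v w" by (simp add: power_mult)
  have "expectation (\<lambda>\<omega>. ?F (X k \<omega>) (X (Suc k) \<omega>)) \<le> expectation (\<lambda>\<omega>. ?Bd (X k \<omega>))"
    by (rule cond_bound(2)[OF F0 V_step_v(1)[OF j] V_step_v(2)[OF j] intB])
  also have "\<dots> = qV j * expectation (\<lambda>\<omega>. (VV k \<omega>)^(2*j)) + DV j * expectation (\<lambda>\<omega>. (1 + UU k \<omega>)^j)"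
    unfolding eqB using i1 i2 by simp
  also have "(\<lambda>\<omega>. ?F (X k \<omega>) (X (Suc k) \<omega>)) = (\<lambda>\<omega>. (VV (Suc k) \<omega>)^(2*j))"
    by (rule ext) (simp only: VV_def lin1m)
  finally show ?thesis .
qed

lemma V_bound:
  assumes j: "1 \<le> j" "2*j \<le> l"
  shows "\<exists>C. \<forall>k. expectation (\<lambda>\<omega>. (VV k \<omega>)^(2*j)) \<le> C * (real k + 1)^j"
proof -
  obtain C1 where C1: "\<And>k. expectation (\<lambda>\<omega>. (1 + UU k \<omega>)^j) \<le> C1 * (real k + 1)^j"
    using U_bound[of j] j by auto
  have q: "0 \<le> qV j" "qV j < 1" using qV_bounds[OF j(1)] by auto
  have D: "0 \<le> DV j" by (rule DV_nonneg[OF j(1)])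
  have C10: "0 \<le> C1"
  proof -
    have "0 \<le> expectation (\<lambda>\<omega>. (1 + UU 0 \<omega>)^j)" by (simp add: UU_def prob_space)
    then show ?thesis using C1[of 0] by simp
  qed
  define B where "B = DV j * C1 / (1 - qV j)"
  have B0: "0 \<le> B" unfolding B_def using q D C10 by simp
  have Beq: "qV j * B + DV j * C1 = B" unfolding B_def using q by (simp add: field_simps)
  have "expectation (\<lambda>\<omega>. (VV k \<omega>)^(2*j)) \<le> B * (real k + 1)^j" for k
  proof (induction k)
    case 0
    have "(0::real)^(2*j) = 0" using j by simp
    then show ?case using j B0 by (simp add: VV_def zero_power)
  next
    case (Suc k)
    have "expectation (\<lambda>\<omega>. (VV (Suc k) \<omega>)^(2*j))
        \<le> qV j * expectation (\<lambda>\<omega>. (VV k \<omega>)^(2*j)) + DV j * expectation (\<lambda>\<omega>. (1 + UU k \<omega>)^j)"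
      by (rule V_rec[OF j])
    also have "\<dots> \<le> qV j * (B * (real k + 1)^j) + DV j * (C1 * (real k + 1)^j)"
      using Suc.IH C1[of k] q D by (intro add_mono mult_left_mono) auto
    also have "\<dots> = (qV j * B + DV j * C1) * (real k + 1)^j" by (simp add: algebra_simps)
    also have "\<dots> = B * (real k + 1)^j" by (simp only: Beq)
    also have "\<dots> \<le> B * (real (Suc k) + 1)^j" using B0 by (intro mult_left_mono power_mono) auto
    finally show ?case .
  qed
  then show ?thesis by blast
qed

end

lemma prod_list_map_nth: "prod_list (map f xs) = (\<Prod>r<length xs. f (xs ! r))"
proof (induction xs)
  case Nil then show ?case by simp
next
  case (Cons x xs)
  have "(\<Prod>r<length (x#xs). f ((x#xs)!r)) = f x * (\<Prod>r<length xs. f (xs!r))"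
    by (simp del: prod.lessThan_Suc add: prod.lessThan_Suc_shift)
  then show ?case using Cons by simp
qed

context gwp2
begin

definition "crM is r = (if is ! r = (1::nat) then (1::real, 0::real) else (0, 1))"

lemma crM_bound: "\<bar>fst (crM is r)\<bar> \<le> 1 \<and> \<bar>snd (crM is r)\<bar> \<le> 1"
  by (simp add: crM_def)

definition "FM is k v w = (\<Prod>r<length is. (lin (crM is r) w - (\<Sum>t\<in>Jset (Suc k) v. mval (crM is r) t)))"

lemma sum_mval_abs: "\<bar>fst c\<bar> \<le> 1 \<Longrightarrow> \<bar>snd c\<bar> \<le> 1 \<Longrightarrow>
    \<bar>\<Sum>t\<in>Jset k v. mval c t\<bar> \<le> mu0 * (real (fst v) + real (snd v) + 1)"
proof -
  assume c: "\<bar>fst c\<bar> \<le> 1" "\<bar>snd c\<bar> \<le> 1"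
  have "\<bar>\<Sum>t\<in>Jset k v. mval c t\<bar> \<le> (\<Sum>t\<in>Jset k v. \<bar>mval c t\<bar>)" by (rule sum_abs)
  also have "\<dots> \<le> (\<Sum>t\<in>Jset k v. mu0)" by (intro sum_mono mval_bound c)
  also have "\<dots> = mu0 * (real (fst v) + real (snd v) + 1)" by (simp add: card_Jset)
  finally show ?thesis .
qed

lemma lin_abs_le_U: "\<bar>fst c\<bar> \<le> 1 \<Longrightarrow> \<bar>snd c\<bar> \<le> 1 \<Longrightarrow> \<bar>lin c w\<bar> \<le> real (fst w) + real (snd w)"
proof -
  assume c: "\<bar>fst c\<bar> \<le> 1" "\<bar>snd c\<bar> \<le> 1"
  have "\<bar>lin c w\<bar> \<le> \<bar>fst c\<bar> * real (fst w) + \<bar>snd c\<bar> * real (snd w)"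
    unfolding lin_def by (metis abs_mult abs_of_nat abs_triangle_ineq)
  also have "\<dots> \<le> 1 * real (fst w) + 1 * real (snd w)" using c by (intro add_mono mult_right_mono) auto
  finally show ?thesis by simp
qed

lemma UU_nonneg: "0 \<le> UU k \<omega>" by (simp add: UU_def)

lemma FM_int:
  assumes len: "length is = l"
  shows "integrable M (\<lambda>\<omega>. FM is k (X k \<omega>) (X (Suc k) \<omega>))"
proof -
  define Q where "Q \<omega> = mu0 * (2 + UU (Suc k) \<omega> + UU k \<omega>)" for \<omega>
  have comp: "\<bar>lin (crM is r) (X (Suc k) \<omega>) - (\<Sum>t\<in>Jset (Suc k) (X k \<omega>). mval (crM is r) t)\<bar> \<le> Q \<omega>" for r \<omega>
  proof -
    have a: "\<bar>lin (crM is r) (X (Suc k) \<omega>)\<bar> \<le> UU (Suc k) \<omega>"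
      unfolding UU_def by (rule lin_abs_le_U[OF conjunct1[OF crM_bound] conjunct2[OF crM_bound]])
    have b: "\<bar>\<Sum>t\<in>Jset (Suc k) (X k \<omega>). mval (crM is r) t\<bar> \<le> mu0 * (UU k \<omega> + 1)"
      unfolding UU_def by (rule sum_mval_abs[OF conjunct1[OF crM_bound] conjunct2[OF crM_bound]])
    have "UU (Suc k) \<omega> \<le> mu0 * UU (Suc k) \<omega>" using mu0_ge1 UU_nonneg[of "Suc k" \<omega>] by (simp add: mult_le_cancel_right1)
    moreover have qe: "Q \<omega> = 2*mu0 + mu0 * UU (Suc k) \<omega> + mu0 * UU k \<omega>" by (simp add: Q_def algebra_simps)
    moreover have b': "\<bar>\<Sum>t\<in>Jset (Suc k) (X k \<omega>). mval (crM is r) t\<bar> \<le> mu0 * UU k \<omega> + mu0"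
      using b by (simp add: algebra_simps)
    ultimately show ?thesis
      using a mu0_ge1 abs_triangle_ineq4[of "lin (crM is r) (X (Suc k) \<omega>)" "\<Sum>t\<in>Jset (Suc k) (X k \<omega>). mval (crM is r) t"]
      by linarith
  qed
  define B where "B \<omega> = 1 + real l * Q \<omega> ^ l" for \<omega>
  have bnd: "\<bar>FM is k (X k \<omega>) (X (Suc k) \<omega>)\<bar> \<le> B \<omega>" for \<omega>
  proof -
    let ?x = "\<lambda>r. lin (crM is r) (X (Suc k) \<omega>) - (\<Sum>t\<in>Jset (Suc k) (X k \<omega>). mval (crM is r) t)"
    have "\<bar>FM is k (X k \<omega>) (X (Suc k) \<omega>)\<bar> = (\<Prod>r<l. \<bar>?x r\<bar>)" by (simp add: FM_def len abs_prod)
    also have "\<dots> \<le> 1 + (\<Sum>r<l. \<bar>?x r\<bar>^l)" by (rule prod_abs_le) auto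
    also have "\<dots> \<le> 1 + (\<Sum>r<l. Q \<omega> ^ l)" using comp by (intro add_left_mono sum_mono power_mono) auto
    finally show ?thesis by (simp add: B_def)
  qed
  have iQ: "integrable M (\<lambda>\<omega>. Q \<omega> ^ l)"
  proof -
    have e: "Q \<omega> ^ l = mu0^l * ((1 + UU (Suc k) \<omega>) + (1 + UU k \<omega>))^l" for \<omega>
    proof -
      have "Q \<omega> = mu0 * ((1 + UU (Suc k) \<omega>) + (1 + UU k \<omega>))" by (simp add: Q_def algebra_simps)
      then show ?thesis by (simp only: power_mult_distrib)
    qed
    have i1: "integrable M (\<lambda>\<omega>. (1 + UU (Suc k) \<omega>)^l)" by (rule U_int) simp
    have i2: "integrable M (\<lambda>\<omega>. (1 + UU k \<omega>)^l)" by (rule U_int) simp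
    have m: "(\<lambda>\<omega>. ((1 + UU (Suc k) \<omega>) + (1 + UU k \<omega>))^l) \<in> borel_measurable M"
      unfolding UU_def by (rule measurable_FXX[where F="\<lambda>v w. ((1 + (real (fst w) + real (snd w))) + (1 + (real (fst v) + real (snd v))))^l"])
    have "integrable M (\<lambda>\<omega>. ((1 + UU (Suc k) \<omega>) + (1 + UU k \<omega>))^l)"
    proof (rule Bochner_Integration.integrable_bound[of _ "\<lambda>\<omega>. 2^l * ((1 + UU (Suc k) \<omega>)^l + (1 + UU k \<omega>)^l)"])
      show "integrable M (\<lambda>\<omega>. 2^l * ((1 + UU (Suc k) \<omega>)^l + (1 + UU k \<omega>)^l))" using i1 i2 by simp
      show "AE \<omega> in M. norm (((1 + UU (Suc k) \<omega>) + (1 + UU k \<omega>))^l) \<le> norm (2^l * ((1 + UU (Suc k) \<omega>)^l + (1 + UU k \<omega>)^l))"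
      proof (intro AE_I2)
        fix \<omega>
        have p1: "0 \<le> 1 + UU (Suc k) \<omega>" "0 \<le> 1 + UU k \<omega>" by (simp_all add: UU_def)
        have "((1 + UU (Suc k) \<omega>) + (1 + UU k \<omega>))^l \<le> 2^l * ((1 + UU (Suc k) \<omega>)^l + (1 + UU k \<omega>)^l)"
          by (rule pow_sum_le2[OF p1])
        then show "norm (((1 + UU (Suc k) \<omega>) + (1 + UU k \<omega>))^l) \<le> norm (2^l * ((1 + UU (Suc k) \<omega>)^l + (1 + UU k \<omega>)^l))"
          using p1 by simp
      qed
    qed (rule m)
    then show ?thesis unfolding e by simp
  qed
  have iB: "integrable M B" unfolding B_def using iQ by simp
  have mF: "(\<lambda>\<omega>. FM is k (X k \<omega>) (X (Suc k) \<omega>)) \<in> borel_measurable M" by (rule measurable_FXX)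
  show ?thesis
  proof (rule Bochner_Integration.integrable_bound[OF iB mF], intro AE_I2)
    fix \<omega>
    have "\<bar>FM is k (X k \<omega>) (X (Suc k) \<omega>)\<bar> \<le> \<bar>B \<omega>\<bar>" using bnd[of \<omega>] by linarith
    then show "norm (FM is k (X k \<omega>) (X (Suc k) \<omega>)) \<le> norm (B \<omega>)" by (simp only: real_norm_def)
  qed
qed

lemma M_bound:
  assumes len: "length is = l"
  shows "\<exists>C. \<forall>k. \<bar>expectation (\<lambda>\<omega>. FM is k (X k \<omega>) (X (Suc k) \<omega>))\<bar> \<le> C * (real k + 1)^(l div 2)"
proof -
  obtain C1 where C1: "\<And>k. expectation (\<lambda>\<omega>. (1 + UU k \<omega>)^(l div 2)) \<le> C1 * (real k + 1)^(l div 2)"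
    using U_bound[of "l div 2"] by auto
  define Bv where "Bv = (1 + l * Kc) * real l ^ l"
  have Bv0: "0 \<le> Bv" unfolding Bv_def using Kc_ge1 by simp
  have "\<bar>expectation (\<lambda>\<omega>. FM is k (X k \<omega>) (X (Suc k) \<omega>))\<bar> \<le> (Bv * C1) * (real k + 1)^(l div 2)" for k
  proof -
    let ?G = "\<lambda>v. expectation (\<lambda>\<omega>'. FM is k v (step (Suc k) v (W (Suc k) \<omega>')))"
    have Gb: "\<bar>?G v\<bar> \<le> Bv * (real (fst v) + real (snd v) + 1)^(l div 2)" for v
      using per_v(2)[where cr="crM is" and m=l and k=k and v=v] crM_bound
      by (simp add: FM_def len Bv_def mult.assoc add.commute add.left_commute)
    have eq: "expectation (\<lambda>\<omega>. FM is k (X k \<omega>) (X (Suc k) \<omega>)) = expectation (\<lambda>\<omega>. ?G (X k \<omega>))"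
      by (rule cond_L[OF FM_int[OF len]])
    have iU: "integrable M (\<lambda>\<omega>. Bv * (1 + UU k \<omega>)^(l div 2))" using U_int[of "l div 2" k] by simp
    have iG: "integrable M (\<lambda>\<omega>. ?G (X k \<omega>))"
    proof (rule Bochner_Integration.integrable_bound[OF iU])
      show "(\<lambda>\<omega>. ?G (X k \<omega>)) \<in> borel_measurable M" by (rule measurable_FX)
      show "AE \<omega> in M. norm (?G (X k \<omega>)) \<le> norm (Bv * (1 + UU k \<omega>)^(l div 2))"
        using Gb Bv0 by (intro AE_I2) (simp add: UU_def add.commute add.left_commute)
    qed
    have "\<bar>expectation (\<lambda>\<omega>. ?G (X k \<omega>))\<bar> \<le> expectation (\<lambda>\<omega>. \<bar>?G (X k \<omega>)\<bar>)" by (rule integral_abs_bound)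
    also have "\<dots> \<le> expectation (\<lambda>\<omega>. Bv * (1 + UU k \<omega>)^(l div 2))"
      using Gb iG iU by (intro integral_mono) (auto simp: UU_def add.commute add.left_commute)
    also have "\<dots> = Bv * expectation (\<lambda>\<omega>. (1 + UU k \<omega>)^(l div 2))" by simp
    also have "\<dots> \<le> Bv * (C1 * (real k + 1)^(l div 2))" using C1 Bv0 by (intro mult_left_mono) auto
    finally show ?thesis unfolding eq by (simp add: mult.assoc)
  qed
  then show ?thesis by blast
qed

end

lemma bigO_from_bound:
  fixes f :: "nat \<Rightarrow> real"
  assumes "\<And>k. \<bar>f k\<bar> \<le> C * (real k + 1)^p"
  shows "f \<in> O(\<lambda>k. real k ^ p)"
proof (rule bigoI[where c="\<bar>C\<bar> * 2^p"])
  show "\<forall>\<^sub>F k in at_top. norm (f k) \<le> \<bar>C\<bar> * 2^p * norm (real k ^ p)"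
    unfolding eventually_at_top_linorder
  proof (intro exI[of _ 1] allI impI)
    fix k :: nat assume k: "1 \<le> k"
    have "\<bar>f k\<bar> \<le> C * (real k + 1)^p" by (rule assms)
    also have "\<dots> \<le> \<bar>C\<bar> * (real k + 1)^p" by (intro mult_right_mono) auto
    also have "(real k + 1)^p \<le> (2 * real k)^p" using k by (intro power_mono) auto
    then have "\<bar>C\<bar> * (real k + 1)^p \<le> \<bar>C\<bar> * (2 * real k)^p" by (intro mult_left_mono) auto
    also have "\<dots> = \<bar>C\<bar> * 2^p * real k ^ p" by (simp add: power_mult_distrib)
    finally show "norm (f k) \<le> \<bar>C\<bar> * 2^p * norm (real k ^ p)" by simp
  qed
qed

lemma bigO_from_bound_Suc:
  fixes f :: "nat \<Rightarrow> real"
  assumes "\<And>k. \<bar>f (Suc k)\<bar> \<le> C * (real k + 1)^p"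
  shows "f \<in> O(\<lambda>k. real k ^ p)"
proof (rule bigoI[where c="\<bar>C\<bar>"])
  show "\<forall>\<^sub>F k in at_top. norm (f k) \<le> \<bar>C\<bar> * norm (real k ^ p)"
    unfolding eventually_at_top_linorder
  proof (intro exI[of _ 1] allI impI)
    fix k :: nat assume k: "1 \<le> k"
    then obtain k' where k': "k = Suc k'" by (cases k) auto
    have "\<bar>f k\<bar> \<le> C * (real k' + 1)^p" unfolding k' by (rule assms)
    also have "\<dots> \<le> \<bar>C\<bar> * (real k' + 1)^p" by (intro mult_right_mono) auto
    also have "(real k' + 1) = real k" using k' by simp
    finally show "norm (f k) \<le> \<bar>C\<bar> * norm (real k ^ p)" by simp
  qed
qed

theorem corollaryB7:
  fixes M :: "'a measure"
    and \<xi> :: "nat \<Rightarrow> nat \<Rightarrow> nat \<Rightarrow> 'a \<Rightarrow> nat \<times> nat"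
    and \<epsilon> :: "nat \<Rightarrow> 'a \<Rightarrow> nat \<times> nat"
    and \<alpha> \<beta> :: real and l :: nat
  assumes P: "prob_space M"
    and indep: "prob_space.indep_vars M (\<lambda>_. count_space UNIV) (gw_family \<xi> \<epsilon>) gw_index_set"
    and ident_xi: "\<And>k j i. 1 \<le> k \<Longrightarrow> 1 \<le> j \<Longrightarrow> i \<in> {1,2} \<Longrightarrow>
                     distr M (count_space UNIV) (\<xi> k j i) = distr M (count_space UNIV) (\<xi> 1 1 i)"
    and ident_eps: "\<And>k. 1 \<le> k \<Longrightarrow>
                     distr M (count_space UNIV) (\<epsilon> k) = distr M (count_space UNIV) (\<epsilon> 1)"
    and alpha: "0 < \<alpha>" "\<alpha> < 1" and beta: "0 < \<beta>" "\<beta> < 1" and alphabeta: "\<alpha> + \<beta> = 1"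
    and mean1: "prob_space.expectation M (\<lambda>\<omega>. real (fst (\<xi> 1 1 1 \<omega>))) = \<alpha>"
               "prob_space.expectation M (\<lambda>\<omega>. real (snd (\<xi> 1 1 1 \<omega>))) = \<beta>"
    and mean2: "prob_space.expectation M (\<lambda>\<omega>. real (fst (\<xi> 1 1 2 \<omega>))) = \<beta>"
               "prob_space.expectation M (\<lambda>\<omega>. real (snd (\<xi> 1 1 2 \<omega>))) = \<alpha>"
    and l_pos: "1 \<le> l"
    and mom: "integrable M (\<lambda>\<omega>. norm (vec_real (\<xi> 1 1 1 \<omega>)) ^ l)"
             "integrable M (\<lambda>\<omega>. norm (vec_real (\<xi> 1 1 2 \<omega>)) ^ l)"
             "integrable M (\<lambda>\<omega>. norm (vec_real (\<epsilon> 1 \<omega>)) ^ l)"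
  defines "X \<equiv> gw_X \<xi> \<epsilon>"
    and "m\<epsilon>1 \<equiv> prob_space.expectation M (\<lambda>\<omega>. real (fst (\<epsilon> 1 \<omega>)))"
    and "m\<epsilon>2 \<equiv> prob_space.expectation M (\<lambda>\<omega>. real (snd (\<epsilon> 1 \<omega>)))"
  defines "Mk \<equiv> (\<lambda>k \<omega> i.
              if i = 1 then real (fst (X k \<omega>)) - (\<alpha> * real (fst (X (k - 1) \<omega>)) + \<beta> * real (snd (X (k - 1) \<omega>))) - m\<epsilon>1
              else real (snd (X k \<omega>)) - (\<beta> * real (fst (X (k - 1) \<omega>)) + \<alpha> * real (snd (X (k - 1) \<omega>))) - m\<epsilon>2)"
    and "U \<equiv> (\<lambda>k \<omega>. real (fst (X k \<omega>)) + real (snd (X k \<omega>)))"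
    and "V \<equiv> (\<lambda>k \<omega>. real (fst (X k \<omega>)) - real (snd (X k \<omega>)))"
  shows "(\<lambda>k. prob_space.expectation M (\<lambda>\<omega>. norm (vec_real (X k \<omega>)) ^ l)) \<in> O(\<lambda>k. real k ^ l)
       \<and> (\<forall>is. length is = l \<and> set is \<subseteq> {1,2} \<longrightarrow>
           (\<lambda>k. prob_space.expectation M (\<lambda>\<omega>. kron_pow_entry (Mk k \<omega>) is)) \<in> O(\<lambda>k. real k ^ (l div 2)))
       \<and> (\<lambda>k. prob_space.expectation M (\<lambda>\<omega>. U k \<omega> ^ l)) \<in> O(\<lambda>k. real k ^ l)
       \<and> (\<forall>j. 2 * j \<le> l \<longrightarrow>
           (\<lambda>k. prob_space.expectation M (\<lambda>\<omega>. V k \<omega> ^ (2 * j))) \<in> O(\<lambda>k. real k ^ j))"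
proof -
  interpret G: gwp2 M \<xi> \<epsilon> \<alpha> \<beta> l
    by (rule gwp2.intro[OF gwp.intro[OF P gwp_axioms.intro[OF indep]] gwp2_axioms.intro])
       (fact ident_xi ident_eps alpha beta alphabeta mean1 mean2 l_pos mom)+
  have XX: "X = G.X" unfolding X_def ..
  have UUe: "U = G.UU" unfolding U_def G.UU_def XX by (rule refl)
  have VVe: "V = G.VV" unfolding V_def G.VV_def XX by (rule refl)
  obtain CU where CU: "\<And>k. G.expectation (\<lambda>\<omega>. (1 + G.UU k \<omega>)^l) \<le> CU * (real k + 1)^l"
    using G.U_bound[of l] by auto
  have P3: "\<bar>G.expectation (\<lambda>\<omega>. U k \<omega> ^ l)\<bar> \<le> CU * (real k + 1)^l" for k
  proof -
    have iU: "integrable M (\<lambda>\<omega>. (1 + G.UU k \<omega>)^l)" by (rule G.U_int) simp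
    have m: "(\<lambda>\<omega>. G.UU k \<omega> ^ l) \<in> borel_measurable M"
      unfolding G.UU_def by (rule G.measurable_FX[where F="\<lambda>v. (real (fst v) + real (snd v))^l"])
    have le: "\<bar>G.UU k \<omega> ^ l\<bar> \<le> (1 + G.UU k \<omega>)^l" for \<omega>
      using G.UU_nonneg[of k \<omega>] by (simp add: power_mono)
    have i: "integrable M (\<lambda>\<omega>. G.UU k \<omega> ^ l)"
      by (rule Bochner_Integration.integrable_bound[OF iU m]) (use le G.UU_nonneg in \<open>auto intro!: AE_I2\<close>)
    have "\<bar>G.expectation (\<lambda>\<omega>. G.UU k \<omega> ^ l)\<bar> = G.expectation (\<lambda>\<omega>. G.UU k \<omega> ^ l)"
      using G.UU_nonneg by (intro abs_of_nonneg integral_nonneg_AE) auto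
    also have "\<dots> \<le> G.expectation (\<lambda>\<omega>. (1 + G.UU k \<omega>)^l)"
      using le by (intro integral_mono i iU) (auto simp: abs_le_iff)
    finally show ?thesis unfolding UUe using CU[of k] by linarith
  qed
  have P1: "\<bar>G.expectation (\<lambda>\<omega>. norm (vec_real (X k \<omega>)) ^ l)\<bar> \<le> CU * (real k + 1)^l" for k
  proof -
    have iU: "integrable M (\<lambda>\<omega>. (1 + G.UU k \<omega>)^l)" by (rule G.U_int) simp
    have m: "(\<lambda>\<omega>. norm (vec_real (G.X k \<omega>)) ^ l) \<in> borel_measurable M"
      by (rule G.measurable_FX[where F="\<lambda>v. norm (vec_real v) ^ l"])
    have nle: "norm (vec_real v) \<le> real (fst v) + real (snd v)" for v
    proof -
      have "norm (vec_real v) = sqrt ((real (fst v))^2 + (real (snd v))^2)"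
        by (simp add: vec_real_def norm_Pair)
      also have "\<dots> \<le> \<bar>real (fst v)\<bar> + \<bar>real (snd v)\<bar>" by (rule sqrt_sum_squares_le_sum_abs)
      finally show ?thesis by simp
    qed
    have le: "\<bar>norm (vec_real (G.X k \<omega>)) ^ l\<bar> \<le> (1 + G.UU k \<omega>)^l" for \<omega>
    proof -
      have "norm (vec_real (G.X k \<omega>)) \<le> 1 + G.UU k \<omega>" using nle[of "G.X k \<omega>"] by (simp add: G.UU_def)
      then show ?thesis by (simp add: power_mono)
    qed
    have i: "integrable M (\<lambda>\<omega>. norm (vec_real (G.X k \<omega>)) ^ l)"
      by (rule Bochner_Integration.integrable_bound[OF iU m]) (use le G.UU_nonneg in \<open>auto intro!: AE_I2 simp: abs_le_iff\<close>)
    have "\<bar>G.expectation (\<lambda>\<omega>. norm (vec_real (G.X k \<omega>)) ^ l)\<bar> = G.expectation (\<lambda>\<omega>. norm (vec_real (G.X k \<omega>)) ^ l)"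
      by (intro abs_of_nonneg integral_nonneg_AE) auto
    also have "\<dots> \<le> G.expectation (\<lambda>\<omega>. (1 + G.UU k \<omega>)^l)"
      using le by (intro integral_mono i iU) (auto simp: abs_le_iff)
    finally show ?thesis unfolding XX using CU[of k] by linarith
  qed
  have P2: "(\<lambda>k. G.expectation (\<lambda>\<omega>. kron_pow_entry (Mk k \<omega>) is)) \<in> O(\<lambda>k. real k ^ (l div 2))"
    if len: "length is = l" for "is"
  proof -
    obtain CM where CM: "\<And>k. \<bar>G.expectation (\<lambda>\<omega>. G.FM is k (G.X k \<omega>) (G.X (Suc k) \<omega>))\<bar> \<le> CM * (real k + 1)^(l div 2)"
      using G.M_bound[OF len] by auto
    have eq: "kron_pow_entry (Mk (Suc k) \<omega>) is = G.FM is k (G.X k \<omega>) (G.X (Suc k) \<omega>)" for k \<omega>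
    proof -
      have "kron_pow_entry (Mk (Suc k) \<omega>) is = (\<Prod>r<length is. Mk (Suc k) \<omega> (is ! r))"
        unfolding kron_pow_entry_def by (rule prod_list_map_nth)
      also have "\<dots> = G.FM is k (G.X k \<omega>) (G.X (Suc k) \<omega>)"
        unfolding G.FM_def
      proof (rule prod.cong[OF refl])
        fix r
        show "Mk (Suc k) \<omega> (is ! r) = lin (G.crM is r) (G.X (Suc k) \<omega>) - (\<Sum>t\<in>Jset (Suc k) (G.X k \<omega>). G.mval (G.crM is r) t)"
          unfolding G.sum_mval
          by (cases "is ! r = 1") (simp_all add: Mk_def XX G.crM_def lin_def m\<epsilon>1_def m\<epsilon>2_def G.me1_def G.me2_def algebra_simps)
      qed
      finally show ?thesis .
    qed
    show ?thesis
      by (rule bigO_from_bound_Suc[where C=CM]) (simp only: eq CM)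
  qed
  have P4: "(\<lambda>k. G.expectation (\<lambda>\<omega>. V k \<omega> ^ (2 * j))) \<in> O(\<lambda>k. real k ^ j)" if jl: "2 * j \<le> l" for j
  proof (cases "j = 0")
    case True
    show ?thesis by (rule bigO_from_bound[where C=1]) (simp add: True G.prob_space)
  next
    case False
    then have j1: "1 \<le> j" by simp
    obtain CV where CV: "\<And>k. G.expectation (\<lambda>\<omega>. (G.VV k \<omega>)^(2*j)) \<le> CV * (real k + 1)^j"
      using G.V_bound[OF j1 jl] by auto
    have "\<bar>G.expectation (\<lambda>\<omega>. V k \<omega> ^ (2 * j))\<bar> \<le> CV * (real k + 1)^j" for k
    proof -
      have "0 \<le> G.expectation (\<lambda>\<omega>. (G.VV k \<omega>)^(2*j))" by (intro integral_nonneg_AE) (simp add: power_mult)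
      then show ?thesis unfolding VVe using CV[of k] by simp
    qed
    then show ?thesis by (rule bigO_from_bound)
  qed
  have Q1: "(\<lambda>k. G.expectation (\<lambda>\<omega>. norm (vec_real (X k \<omega>)) ^ l)) \<in> O(\<lambda>k. real k ^ l)"
    by (rule bigO_from_bound[OF P1])
  have Q3: "(\<lambda>k. G.expectation (\<lambda>\<omega>. U k \<omega> ^ l)) \<in> O(\<lambda>k. real k ^ l)"
    by (rule bigO_from_bound[OF P3])
  show ?thesis
  proof (intro conjI allI impI)
    fix "is" :: "nat list" assume "length is = l \<and> set is \<subseteq> {1,2}"
    then show "(\<lambda>k. G.expectation (\<lambda>\<omega>. kron_pow_entry (Mk k \<omega>) is)) \<in> O(\<lambda>k. real k ^ (l div 2))"
      using P2 by blast
  qed (use Q1 Q3 P4 in auto)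
qed

end
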